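(* For all $n\ge1$, $$a_{\{0101,0112\}}(n)=a_{\{0102,0112\}}(n)=a_{\{0121,0112\}}(n)=a_{\{0102,0120\}}(n)=(n-1)2^{n-2}+1.$$
   Context: An ascent in an integer sequence $s_1\cdots s_m$ is an index $j$ with $s_j<s_{j+1}$; $\mathrm{asc}$ denotes the number of ascents. An ascent sequence is a sequence $x_1\cdots x_n$ of nonnegative integers with $x_1=0$ and $x_i\le 1+\mathrm{asc}(x_1\cdots x_{i-1})$ for all $i\ge2$. The reduction $\mathrm{red}(w)$ of an integer sequence $w$ replaces the $i$-th smallest distinct letter of $w$ by $i-1$; a pattern is a reduced sequence. A sequence $x$ contains a pattern $p=p_1\cdots p_k$ if there are indices $i_1<\cdots<i_k$ with $\mathrm{red}(x_{i_1}\cdots x_{i_k})=p$; otherwise $x$ avoids $p$. For a finite set $P$ of patterns, $a_P(n)$ denotes the number of ascent sequences of length $n$ avoiding every pattern in $P$. *)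

theory Defs
  imports Main
begin

definition asc :: "nat list \<Rightarrow> nat" where
  "asc s = card {j. Suc j < length s \<and> s ! j < s ! Suc j}"

text \<open>Ascent sequences: x_1 = 0 and x_i <= 1 + asc(x_1 ... x_(i-1)) for i >= 2.
  Lists are 0-indexed, so x ! i corresponds to x_(i+1).\<close>
definition ascent_seq :: "nat list \<Rightarrow> bool" where
  "ascent_seq x \<longleftrightarrow> x \<noteq> [] \<and> x ! 0 = 0 \<and>
     (\<forall>i. 1 \<le> i \<and> i < length x \<longrightarrow> x ! i \<le> 1 + asc (take i x))"

definition red :: "nat list \<Rightarrow> nat list" where
  "red w = map (\<lambda>a. card {b \<in> set w. b < a}) w"

definition contains :: "nat list \<Rightarrow> nat list \<Rightarrow> bool" where
  "contains x p \<longleftrightarrow> (\<exists>s \<in> set (subseqs x). red s = p)"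

definition avoids :: "nat list \<Rightarrow> nat list \<Rightarrow> bool" where
  "avoids x p \<longleftrightarrow> \<not> contains x p"

definition a_count :: "nat list set \<Rightarrow> nat \<Rightarrow> nat" where
  "a_count P n = card {x. ascent_seq x \<and> length x = n \<and> (\<forall>p \<in> P. avoids x p)}"

end

theory Submission
  imports Defs
begin

lemma nil_in_subseqs: "[] \<in> set (subseqs x)"
  by (induction x) (auto simp: Let_def)

lemma subseqs_idx:
  "s \<in> set (subseqs x) \<longleftrightarrow>
   (\<exists>I. sorted_wrt (<) I \<and> (\<forall>i\<in>set I. i < length x) \<and> s = map ((!) x) I)"
proof (induction x arbitrary: s)
  case Nil
  then show ?case by auto
next
  case (Cons a x)
  show ?case
  proof
    assume "s \<in> set (subseqs (a # x))"
    then consider (c1) s' where "s = a # s'" "s' \<in> set (subseqs x)" | (c2) "s \<in> set (subseqs x)"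
      by (auto simp: Let_def)
    then show "\<exists>I. sorted_wrt (<) I \<and> (\<forall>i\<in>set I. i < length (a # x)) \<and> s = map ((!) (a # x)) I"
    proof cases
      case c1
      then obtain I where I: "sorted_wrt (<) I" "\<forall>i\<in>set I. i < length x" "s' = map ((!) x) I"
        using Cons by blast
      show ?thesis
        by (rule exI[of _ "0 # map Suc I"]) (use I c1 in \<open>auto simp: sorted_wrt_map\<close>)
    next
      case c2
      then obtain I where I: "sorted_wrt (<) I" "\<forall>i\<in>set I. i < length x" "s = map ((!) x) I"
        using Cons by blast
      show ?thesis
        by (rule exI[of _ "map Suc I"]) (use I in \<open>auto simp: sorted_wrt_map\<close>)
    qed
  next
    assume "\<exists>I. sorted_wrt (<) I \<and> (\<forall>i\<in>set I. i < length (a # x)) \<and> s = map ((!) (a # x)) I"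
    then obtain I where I: "sorted_wrt (<) I" "\<forall>i\<in>set I. i < Suc (length x)" "s = map ((!) (a # x)) I"
      by auto
    show "s \<in> set (subseqs (a # x))"
    proof (cases I)
      case Nil
      then show ?thesis using I nil_in_subseqs[of "a#x"] by simp
    next
      case (Cons i I')
      define J where "J = map (\<lambda>i. i - 1) I'"
      have pos: "\<forall>j\<in>set I'. 0 < j" using I Cons by auto
      have I'eq: "I' = map Suc J" unfolding J_def using pos by (induction I') auto
      have J: "sorted_wrt (<) J" "\<forall>j\<in>set J. j < length x"
        using I Cons I'eq by (auto simp: sorted_wrt_map)
      show ?thesis
      proof (cases i)
        case 0
        have "map ((!) x) J \<in> set (subseqs x)" using Cons.IH J by blast
        moreover have "s = a # map ((!) x) J" using I Cons 0 I'eq by simp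
        ultimately show ?thesis by (auto simp: Let_def)
      next
        case (Suc i0)
        have "map ((!) x) (i0 # J) \<in> set (subseqs x)"
          using Cons.IH[of "map ((!) x) (i0 # J)"] J I Cons Suc I'eq
          by (auto simp: sorted_wrt_map intro!: exI[of _ "i0 # J"])
        moreover have "s = map ((!) x) (i0 # J)" using I Cons Suc I'eq by simp
        ultimately show ?thesis by (auto simp: Let_def)
      qed
    qed
  qed
qed

lemma length_red[simp]: "length (red w) = length w"
  by (simp add: red_def)

lemma red_nth: "i < length w \<Longrightarrow> red w ! i = card {b \<in> set w. b < w ! i}"
  by (simp add: red_def)

lemma red_order:
  assumes "i < length w" "j < length w"
  shows "red w ! i < red w ! j \<longleftrightarrow> w ! i < w ! j"
proof
  assume "w ! i < w ! j"
  then have "{b \<in> set w. b < w ! i} \<subset> {b \<in> set w. b < w ! j}"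
  proof -
    have "w ! i \<in> {b \<in> set w. b < w ! j}" using assms \<open>w ! i < w ! j\<close> by simp
    moreover have "w ! i \<notin> {b \<in> set w. b < w ! i}" by simp
    moreover have "{b \<in> set w. b < w ! i} \<subseteq> {b \<in> set w. b < w ! j}"
      using \<open>w ! i < w ! j\<close> by auto
    ultimately show ?thesis by blast
  qed
  then show "red w ! i < red w ! j" using assms by (simp add: red_nth psubset_card_mono)
next
  assume "red w ! i < red w ! j"
  show "w ! i < w ! j"
  proof (rule ccontr)
    assume "\<not> w ! i < w ! j"
    then have "{b \<in> set w. b < w ! j} \<subseteq> {b \<in> set w. b < w ! i}" by auto
    then have "red w ! j \<le> red w ! i" using assms by (simp add: red_nth card_mono)
    then show False using \<open>red w ! i < red w ! j\<close> by simp
  qed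
qed

lemma red_iso:
  assumes len: "length v = length w"
    and iso: "\<forall>i<length v. \<forall>j<length v. (v ! i < v ! j \<longleftrightarrow> w ! i < w ! j)"
  shows "red v = red w"
proof (rule nth_equalityI)
  show "length (red v) = length (red w)" using len by simp
next
  fix i assume "i < length (red v)"
  then have i: "i < length v" by simp
  have eqv: "v ! j = v ! k \<longleftrightarrow> w ! j = w ! k" if "j < length v" "k < length v" for j k
  proof -
    have "(\<not> v ! j < v ! k \<and> \<not> v ! k < v ! j) \<longleftrightarrow> (\<not> w ! j < w ! k \<and> \<not> w ! k < w ! j)"
      using iso that by blast
    then show ?thesis by (metis less_irrefl linorder_neqE_nat)
  qed
  define f where "f = (\<lambda>b. w ! (SOME j. j < length v \<and> v ! j = b))"
  have fj: "f (v ! j) = w ! j" if "j < length v" for j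
  proof -
    let ?k = "SOME k. k < length v \<and> v ! k = v ! j"
    have k: "?k < length v \<and> v ! ?k = v ! j" by (rule someI_ex) (use that in blast)
    then have "w ! ?k = w ! j" using eqv that by blast
    then show ?thesis unfolding f_def by simp
  qed
  have inj: "inj_on f (set v)"
  proof (rule inj_onI)
    fix a b assume ab: "a \<in> set v" "b \<in> set v" "f a = f b"
    then obtain ja where ja: "ja < length v" "a = v ! ja" by (auto simp: in_set_conv_nth)
    obtain jb where jb: "jb < length v" "b = v ! jb" using ab by (auto simp: in_set_conv_nth)
    have "w ! ja = w ! jb" using ab(3) ja jb fj by simp
    then show "a = b" using eqv ja jb by blast
  qed
  have img: "f ` {b \<in> set v. b < v ! i} = {b \<in> set w. b < w ! i}"
  proof
    show "f ` {b \<in> set v. b < v ! i} \<subseteq> {b \<in> set w. b < w ! i}"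
    proof
      fix c assume "c \<in> f ` {b \<in> set v. b < v ! i}"
      then obtain b where b: "b \<in> set v" "b < v ! i" "c = f b" by blast
      then obtain j where j: "j < length v" "b = v ! j" by (auto simp: in_set_conv_nth)
      have "c = w ! j" using b j fj by simp
      moreover have "w ! j < w ! i" using iso i j b by blast
      moreover have "w ! j \<in> set w" using j len by simp
      ultimately show "c \<in> {b \<in> set w. b < w ! i}" by simp
    qed
  next
    show "{b \<in> set w. b < w ! i} \<subseteq> f ` {b \<in> set v. b < v ! i}"
    proof
      fix c assume "c \<in> {b \<in> set w. b < w ! i}"
      then have c: "c \<in> set w" "c < w ! i" by auto
      then obtain j where j: "j < length v" "c = w ! j" using len by (auto simp: in_set_conv_nth)
      then have "v ! j < v ! i" using iso i c by blast
      moreover have "v ! j \<in> set v" using j by simp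
      moreover have "c = f (v ! j)" using fj j by simp
      ultimately show "c \<in> f ` {b \<in> set v. b < v ! i}" by blast
    qed
  qed
  have inj2: "inj_on f {b \<in> set v. b < v ! i}" using inj by (rule inj_on_subset) blast
  have "card {b \<in> set v. b < v ! i} = card {b \<in> set w. b < w ! i}"
    using card_image[OF inj2] img by simp
  then show "red v ! i = red w ! i" using i len by (simp add: red_nth)
qed

lemma red_eq_iff:
  assumes "red p = p"
  shows "red w = p \<longleftrightarrow> length w = length p \<and>
     (\<forall>i<length w. \<forall>j<length w. (w ! i < w ! j \<longleftrightarrow> p ! i < p ! j))"
proof
  assume h: "red w = p"
  then have "length w = length p" by (metis length_red)
  moreover have "\<forall>i<length w. \<forall>j<length w. (w ! i < w ! j \<longleftrightarrow> p ! i < p ! j)"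
    using red_order h by blast
  ultimately show "length w = length p \<and> (\<forall>i<length w. \<forall>j<length w. (w ! i < w ! j \<longleftrightarrow> p ! i < p ! j))" by blast
next
  assume "length w = length p \<and> (\<forall>i<length w. \<forall>j<length w. (w ! i < w ! j \<longleftrightarrow> p ! i < p ! j))"
  then have "red w = red p" by (intro red_iso) auto
  then show "red w = p" using assms by simp
qed



lemma red_self:
  assumes "set p = {0..<m}"
  shows "red p = p"
proof (rule nth_equalityI)
  show "length (red p) = length p" by simp
next
  fix i assume "i < length (red p)"
  then have i: "i < length p" by simp
  then have "p ! i < m" using assms nth_mem by fastforce
  then have "{b \<in> set p. b < p ! i} = {0..<p ! i}" using assms by auto
  then show "red p ! i = p ! i" using i by (simp add: red_nth)
qed

lemma red4:
  assumes "red p = p" "length p = 4"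
  shows "red [a,b,c,d] = p \<longleftrightarrow>
    (\<forall>i<length p. \<forall>j<length p. ([a,b,c,d] ! i < [a,b,c,d] ! j \<longleftrightarrow> p ! i < p ! j))"
proof -
  have l: "length [a,b,c,d] = length p" using assms(2) by simp
  show ?thesis using red_eq_iff[OF assms(1), of "[a,b,c,d]"] by (simp only: l simp_thms)
qed

lemma p0102: "red [a,b,c,d] = [0,1,0,2] \<longleftrightarrow> a < b \<and> c = a \<and> b < (d::nat)"
proof -
  have "set [0,1,0,2::nat] = {0..<3}" by auto
  from red4[OF red_self[OF this]] show ?thesis
    by (simp add: numeral_eq_Suc All_less_Suc) linarith
qed

lemma p0112: "red [a,b,c,d] = [0,1,1,2] \<longleftrightarrow> a < b \<and> c = b \<and> b < (d::nat)"
proof -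
  have "set [0,1,1,2::nat] = {0..<3}" by auto
  from red4[OF red_self[OF this]] show ?thesis
    by (simp add: numeral_eq_Suc All_less_Suc) linarith
qed

lemma p0101: "red [a,b,c,d] = [0,1,0,1] \<longleftrightarrow> a < b \<and> c = a \<and> d = (b::nat)"
proof -
  have "set [0,1,0,1::nat] = {0..<2}" by auto
  from red4[OF red_self[OF this]] show ?thesis
    by (simp add: numeral_eq_Suc All_less_Suc) linarith
qed

lemma p0121: "red [a,b,c,d] = [0,1,2,1] \<longleftrightarrow> a < b \<and> b < c \<and> d = (b::nat)"
proof -
  have "set [0,1,2,1::nat] = {0..<3}" by auto
  from red4[OF red_self[OF this]] show ?thesis
    by (simp add: numeral_eq_Suc All_less_Suc) linarith
qed

lemma p0120: "red [a,b,c,d] = [0,1,2,0] \<longleftrightarrow> a < b \<and> b < c \<and> d = (a::nat)"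
proof -
  have "set [0,1,2,0::nat] = {0..<3}" by auto
  from red4[OF red_self[OF this]] show ?thesis
    by (simp add: numeral_eq_Suc All_less_Suc) linarith
qed


lemma contains4:
  assumes "length p = 4"
  shows "contains x p \<longleftrightarrow>
    (\<exists>i j k l. i < j \<and> j < k \<and> k < l \<and> l < length x \<and> red [x!i, x!j, x!k, x!l] = p)"
proof
  assume "contains x p"
  then obtain s where s: "s \<in> set (subseqs x)" "red s = p" unfolding contains_def by blast
  then obtain I where I: "sorted_wrt (<) I" "\<forall>i\<in>set I. i < length x" "s = map ((!) x) I"
    using subseqs_idx by blast
  have "length I = 4" using s(2) I(3) assms by (metis length_map length_red)
  then obtain i j k l where "I = [i,j,k,l]"
    by (auto simp: numeral_eq_Suc length_Suc_conv)
  then show "\<exists>i j k l. i < j \<and> j < k \<and> k < l \<and> l < length x \<and> red [x!i, x!j, x!k, x!l] = p"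
    using I s by auto
next
  assume "\<exists>i j k l. i < j \<and> j < k \<and> k < l \<and> l < length x \<and> red [x!i, x!j, x!k, x!l] = p"
  then obtain i j k l where h: "i < j" "j < k" "k < l" "l < length x" "red [x!i, x!j, x!k, x!l] = p"
    by blast
  have "[x!i, x!j, x!k, x!l] \<in> set (subseqs x)"
    unfolding subseqs_idx using h by (intro exI[of _ "[i,j,k,l]"]) auto
  then show "contains x p" unfolding contains_def using h by blast
qed

definition occ3 :: "nat list \<Rightarrow> (nat \<Rightarrow> nat \<Rightarrow> nat \<Rightarrow> bool) \<Rightarrow> bool" where
  "occ3 x Q \<longleftrightarrow> (\<exists>i j k. i < j \<and> j < k \<and> k < length x \<and> Q (x!i) (x!j) (x!k))"

lemma occ3I: "i < j \<Longrightarrow> j < k \<Longrightarrow> k < length x \<Longrightarrow> Q (x!i) (x!j) (x!k) \<Longrightarrow> occ3 x Q"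
  unfolding occ3_def by blast

lemma contains_snoc:
  assumes "length p = 4"
  shows "contains (x @ [v]) p \<longleftrightarrow> contains x p \<or> occ3 x (\<lambda>a b c. red [a,b,c,v] = p)"
proof -
  have "contains (x @ [v]) p \<longleftrightarrow>
    (\<exists>i j k l. i < j \<and> j < k \<and> k < l \<and> l < Suc (length x) \<and>
       red [(x@[v])!i, (x@[v])!j, (x@[v])!k, (x@[v])!l] = p)"
    using contains4[OF assms] by simp
  also have "\<dots> \<longleftrightarrow> (\<exists>i j k l. i < j \<and> j < k \<and> k < l \<and> l < length x \<and>
       red [x!i, x!j, x!k, x!l] = p) \<or> occ3 x (\<lambda>a b c. red [a,b,c,v] = p)"
    (is "?L \<longleftrightarrow> ?R")
  proof
    assume ?L
    then obtain i j k l where h: "i < j" "j < k" "k < l" "l < Suc (length x)"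
       "red [(x@[v])!i, (x@[v])!j, (x@[v])!k, (x@[v])!l] = p" by blast
    show ?R
    proof (cases "l < length x")
      case True
      then show ?thesis using h by (auto simp: nth_append)
    next
      case False
      then have l: "l = length x" using h by simp
      have ik: "i < length x" "j < length x" "k < length x" using h l by auto
      have "red [x!i, x!j, x!k, v] = p" using h(5) ik l by (simp add: nth_append)
      then have "occ3 x (\<lambda>a b c. red [a,b,c,v] = p)" using h ik by (intro occ3I[of i j k]) auto
      then show ?thesis by blast
    qed
  next
    assume ?R
    then show ?L
    proof
      assume "\<exists>i j k l. i < j \<and> j < k \<and> k < l \<and> l < length x \<and> red [x!i, x!j, x!k, x!l] = p"
      then obtain i j k l where h: "i < j" "j < k" "k < l" "l < length x" "red [x!i, x!j, x!k, x!l] = p"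
        by blast
      show ?L by (rule exI[of _ i], rule exI[of _ j], rule exI[of _ k], rule exI[of _ l]) (use h in \<open>auto simp: nth_append\<close>)
    next
      assume "occ3 x (\<lambda>a b c. red [a,b,c,v] = p)"
      then obtain i j k where h: "i < j" "j < k" "k < length x" "red [x!i, x!j, x!k, v] = p"
        unfolding occ3_def by blast
      show ?L by (rule exI[of _ i], rule exI[of _ j], rule exI[of _ k], rule exI[of _ "length x"]) (use h in \<open>auto simp: nth_append\<close>)
    qed
  qed
  also have "\<dots> \<longleftrightarrow> contains x p \<or> occ3 x (\<lambda>a b c. red [a,b,c,v] = p)"
    using contains4[OF assms] by simp
  finally show ?thesis .
qed

lemma asc_snoc:
  assumes "x \<noteq> []"
  shows "asc (x @ [v]) = asc x + (if last x < v then 1 else 0)"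
proof -
  let ?n = "length x"
  have "{j. Suc j < length (x @ [v]) \<and> (x @ [v]) ! j < (x @ [v]) ! Suc j} =
        {j. Suc j < ?n \<and> x ! j < x ! Suc j} \<union> (if last x < v then {?n - 1} else {})"
    (is "?A = ?B")
  proof (intro set_eqI iffI)
    fix j assume "j \<in> ?A"
    then have j: "Suc j < Suc ?n" "(x @ [v]) ! j < (x @ [v]) ! Suc j" by auto
    show "j \<in> ?B"
    proof (cases "Suc j < ?n")
      case True
      then show ?thesis using j by (auto simp: nth_append)
    next
      case False
      then have "j = ?n - 1" "Suc j = ?n" using j by auto
      then show ?thesis using j assms by (auto simp: nth_append last_conv_nth)
    qed
  next
    fix j assume "j \<in> ?B"
    then show "j \<in> ?A" using assms
      by (auto simp: nth_append last_conv_nth split: if_splits)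
  qed
  moreover have "?n - 1 \<notin> {j. Suc j < ?n \<and> x ! j < x ! Suc j}" using assms by auto
  moreover have "finite {j. Suc j < ?n \<and> x ! j < x ! Suc j}" by (rule finite_subset[of _ "{..<?n}"]) auto
  ultimately show ?thesis unfolding asc_def by auto
qed

lemma asc_le: "asc x \<le> length x - 1"
proof -
  have "{j. Suc j < length x \<and> x ! j < x ! Suc j} \<subseteq> {..<length x - 1}" by auto
  then show ?thesis unfolding asc_def by (metis card_lessThan card_mono finite_lessThan)
qed

lemma take_snoc_le: "i \<le> length x \<Longrightarrow> take i (x @ [v]) = take i x"
  by simp

lemma ascent_seq_snoc:
  assumes "x \<noteq> []"
  shows "ascent_seq (x @ [v]) \<longleftrightarrow> ascent_seq x \<and> v \<le> 1 + asc x"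
proof -
  have a: "(x @ [v]) ! 0 = x ! 0" using assms by (simp add: nth_append)
  have b: "(\<forall>i. 1 \<le> i \<and> i < length (x @ [v]) \<longrightarrow> (x @ [v]) ! i \<le> 1 + asc (take i (x @ [v])))
     \<longleftrightarrow> (\<forall>i. 1 \<le> i \<and> i < length x \<longrightarrow> x ! i \<le> 1 + asc (take i x)) \<and> v \<le> 1 + asc x"
    (is "?L \<longleftrightarrow> ?R")
  proof
    assume L: ?L
    have "1 \<le> length x" using assms by (cases x) auto
    then have "v \<le> 1 + asc x" using L[rule_format, of "length x"]
      by (simp add: nth_append)
    moreover have "x ! i \<le> 1 + asc (take i x)" if "1 \<le> i" "i < length x" for i
      using L[rule_format, of i] that by (simp add: nth_append)
    ultimately show ?R by blast
  next
    assume R: ?R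
    show ?L
    proof (intro allI impI)
      fix i assume i: "1 \<le> i \<and> i < length (x @ [v])"
      show "(x @ [v]) ! i \<le> 1 + asc (take i (x @ [v]))"
      proof (cases "i < length x")
        case True
        then show ?thesis using R i by (simp add: nth_append)
      next
        case False
        then have "i = length x" using i by simp
        then show ?thesis using R by (simp add: nth_append)
      qed
    qed
  qed
  show ?thesis unfolding ascent_seq_def using a b assms by auto
qed

lemma ascent_seq_single: "ascent_seq [v] \<longleftrightarrow> v = 0"
  unfolding ascent_seq_def by auto

lemma max_le_asc:
  assumes "ascent_seq x"
  shows "Max (set x) \<le> asc x"
  using assms
proof (induction x rule: rev_induct)
  case Nil
  then show ?case by (simp add: ascent_seq_def)
next
  case (snoc v y)
  show ?case
  proof (cases "y = []")
    case True
    then show ?thesis using snoc.prems by (simp add: ascent_seq_single)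
  next
    case False
    then have y: "ascent_seq y" "v \<le> 1 + asc y" using snoc.prems ascent_seq_snoc by auto
    have IH: "Max (set y) \<le> asc y" using snoc.IH y by blast
    have ly: "last y \<le> Max (set y)" using False by simp
    show ?thesis
    proof (cases "last y < v")
      case True
      then show ?thesis using IH y False ly by (auto simp: asc_snoc)
    next
      case f2: False
      then have "v \<le> Max (set y)" using ly by simp
      then have "Max (set (y @ [v])) = Max (set y)" using False by (auto simp: max_def)
      then show ?thesis using IH False f2 by (simp add: asc_snoc)
    qed
  qed
qed

lemma elem_le_asc: "ascent_seq x \<Longrightarrow> a \<in> set x \<Longrightarrow> a \<le> asc x"
  using max_le_asc[of x] by (meson Max_ge List.finite_set le_trans)

definition Cls :: "nat list set \<Rightarrow> nat \<Rightarrow> nat list set" where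
  "Cls P n = {x. ascent_seq x \<and> length x = n \<and> (\<forall>p\<in>P. avoids x p)}"

lemma a_count_Cls: "a_count P n = card (Cls P n)"
  unfolding a_count_def Cls_def by simp

lemma Cls_snoc:
  assumes P4: "\<forall>p\<in>P. length p = 4" and x: "x \<noteq> []"
  shows "x @ [v] \<in> Cls P (Suc n) \<longleftrightarrow>
    x \<in> Cls P n \<and> v \<le> 1 + asc x \<and> (\<forall>p\<in>P. \<not> occ3 x (\<lambda>a b c. red [a,b,c,v] = p))"
proof -
  have c: "(\<forall>p\<in>P. \<not> contains (x @ [v]) p) \<longleftrightarrow>
     (\<forall>p\<in>P. \<not> contains x p) \<and> (\<forall>p\<in>P. \<not> occ3 x (\<lambda>a b c. red [a,b,c,v] = p))"
    using contains_snoc P4 by blast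
  show ?thesis unfolding Cls_def avoids_def mem_Collect_eq ascent_seq_snoc[OF x] c length_append_singleton
    by blast
qed

lemma Cls_1:
  assumes P4: "\<forall>p\<in>P. length p = 4"
  shows "Cls P 1 = {[0]}"
proof -
  have "\<not> contains [0] p" if "p \<in> P" for p
  proof -
    have "length p = 4" using P4 that by blast
    then show ?thesis using contains4[of p "[0]"] by simp
  qed
  moreover have "x \<in> Cls P 1 \<Longrightarrow> x = [0]" for x
    unfolding Cls_def by (cases x) (auto simp: ascent_seq_def)
  ultimately show ?thesis unfolding Cls_def avoids_def by (auto simp: ascent_seq_single)
qed

lemma Cls_ne: "x \<in> Cls P n \<Longrightarrow> 1 \<le> n \<Longrightarrow> x \<noteq> []"
  unfolding Cls_def by auto

lemma finite_Cls: "finite (Cls P n)"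
proof -
  have "Cls P n \<subseteq> {x. set x \<subseteq> {..n} \<and> length x = n}"
  proof
    fix x assume "x \<in> Cls P n"
    then have x: "ascent_seq x" "length x = n" unfolding Cls_def by auto
    have "a \<le> n" if "a \<in> set x" for a
      using elem_le_asc[OF x(1) that] asc_le[of x] x(2) by linarith
    then show "x \<in> {x. set x \<subseteq> {..n} \<and> length x = n}" using x by auto
  qed
  moreover have "finite {x. set x \<subseteq> {..n} \<and> length x = n}"
    by (rule finite_lists_length_eq) simp
  ultimately show ?thesis by (rule finite_subset)
qed

locale cls =
  fixes P :: "nat list set" and E :: "nat list \<Rightarrow> nat set" and Inv :: "nat list \<Rightarrow> bool"
  assumes P4: "\<forall>p\<in>P. length p = 4"
    and Inv0: "Inv [0]"
    and ext: "\<And>x n v. 1 \<le> n \<Longrightarrow> x \<in> Cls P n \<Longrightarrow> Inv x \<Longrightarrow>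
       (v \<le> 1 + asc x \<and> (\<forall>p\<in>P. \<not> occ3 x (\<lambda>a b c. red [a,b,c,v] = p))) \<longleftrightarrow> v \<in> E x"
    and inv_step: "\<And>x n v. 1 \<le> n \<Longrightarrow> x \<in> Cls P n \<Longrightarrow> Inv x \<Longrightarrow> v \<in> E x \<Longrightarrow> Inv (x @ [v])"
    and finE: "\<And>x n. 1 \<le> n \<Longrightarrow> x \<in> Cls P n \<Longrightarrow> Inv x \<Longrightarrow> finite (E x)"
begin

lemma inv_all: "1 \<le> n \<Longrightarrow> x \<in> Cls P n \<Longrightarrow> Inv x"
proof (induction n arbitrary: x rule: nat_induct_at_least)
  case base
  then show ?case using Cls_1[OF P4] Inv0 by simp
next
  case (Suc n)
  then have "x \<noteq> []" by (auto simp: Cls_def)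
  then obtain y v where xy: "x = y @ [v]" by (metis rev_exhaust)
  have "length y = n" using Suc.prems xy by (simp add: Cls_def)
  then have yne: "y \<noteq> []" using Suc.hyps by auto
  have h: "y \<in> Cls P n \<and> v \<le> 1 + asc y \<and> (\<forall>p\<in>P. \<not> occ3 y (\<lambda>a b c. red [a,b,c,v] = p))"
    using Cls_snoc[OF P4 yne] Suc.prems xy by blast
  then have "Inv y" using Suc.IH by blast
  then have "v \<in> E y" using ext[OF Suc.hyps] h by blast
  then show ?case using inv_step[OF Suc.hyps] h \<open>Inv y\<close> xy by blast
qed

lemma snoc_iff:
  assumes n: "1 \<le> n" and x: "x \<in> Cls P n"
  shows "x @ [v] \<in> Cls P (Suc n) \<longleftrightarrow> v \<in> E x"
proof -
  have xne: "x \<noteq> []" using Cls_ne[OF x n] .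
  have "x @ [v] \<in> Cls P (Suc n) \<longleftrightarrow>
    v \<le> 1 + asc x \<and> (\<forall>p\<in>P. \<not> occ3 x (\<lambda>a b c. red [a,b,c,v] = p))"
    using Cls_snoc[OF P4 xne, of v n] x by simp
  also have "\<dots> \<longleftrightarrow> v \<in> E x" by (rule ext[OF n x inv_all[OF n x]])
  finally show ?thesis .
qed

lemma count_step:
  assumes n: "1 \<le> n"
  shows "card {y \<in> Cls P (Suc n). Q y} = (\<Sum>x\<in>Cls P n. card {v \<in> E x. Q (x @ [v])})"
proof -
  have eq: "{y \<in> Cls P (Suc n). Q y} = (\<Union>x\<in>Cls P n. (\<lambda>v. x @ [v]) ` {v \<in> E x. Q (x @ [v])})"
  proof (intro set_eqI iffI)
    fix y assume y: "y \<in> {y \<in> Cls P (Suc n). Q y}"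
    then have "y \<noteq> []" by (auto simp: Cls_def)
    then obtain x v where xy: "y = x @ [v]" by (metis rev_exhaust)
    have "length x = n" using y xy by (simp add: Cls_def)
    then have xne: "x \<noteq> []" using n by auto
    have "x \<in> Cls P n" using Cls_snoc[OF P4 xne] y xy by blast
    moreover have "v \<in> E x" using snoc_iff[OF n \<open>x \<in> Cls P n\<close>] y xy by blast
    ultimately show "y \<in> (\<Union>x\<in>Cls P n. (\<lambda>v. x @ [v]) ` {v \<in> E x. Q (x @ [v])})"
      using y xy by blast
  next
    fix y assume "y \<in> (\<Union>x\<in>Cls P n. (\<lambda>v. x @ [v]) ` {v \<in> E x. Q (x @ [v])})"
    then obtain x v where "x \<in> Cls P n" "v \<in> E x" "Q (x @ [v])" "y = x @ [v]" by blast
    then show "y \<in> {y \<in> Cls P (Suc n). Q y}" using snoc_iff[OF n] by blast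
  qed
  have "card (\<Union>x\<in>Cls P n. (\<lambda>v. x @ [v]) ` {v \<in> E x. Q (x @ [v])})
      = (\<Sum>x\<in>Cls P n. card ((\<lambda>v. x @ [v]) ` {v \<in> E x. Q (x @ [v])}))"
  proof (rule card_UN_disjoint)
    show "finite (Cls P n)" by (rule finite_Cls)
    show "\<forall>x\<in>Cls P n. finite ((\<lambda>v. x @ [v]) ` {v \<in> E x. Q (x @ [v])})"
      using finE[OF n] inv_all[OF n] by auto
    show "\<forall>x\<in>Cls P n. \<forall>x'\<in>Cls P n. x \<noteq> x' \<longrightarrow>
      (\<lambda>v. x @ [v]) ` {v \<in> E x. Q (x @ [v])} \<inter> (\<lambda>v. x' @ [v]) ` {v \<in> E x'. Q (x' @ [v])} = {}"
      by auto
  qed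
  also have "\<dots> = (\<Sum>x\<in>Cls P n. card {v \<in> E x. Q (x @ [v])})"
    by (intro sum.cong refl card_image) (auto simp: inj_on_def)
  finally show ?thesis using eq by simp
qed

end

lemma sum_if_card: "finite A \<Longrightarrow> (\<Sum>x\<in>A. if c x then 1 else 0) = card {x\<in>A. c x}"
  by (simp add: sum.inter_filter[symmetric])

locale flagcls = cls +
  fixes flag zero :: "nat list \<Rightarrow> bool"
  assumes cardE: "\<And>x n. 1 \<le> n \<Longrightarrow> x \<in> Cls P n \<Longrightarrow> Inv x \<Longrightarrow>
      card (E x) = (if flag x \<and> \<not> zero x then 3 else 2)"
    and flagE: "\<And>x n. 1 \<le> n \<Longrightarrow> x \<in> Cls P n \<Longrightarrow> Inv x \<Longrightarrow>
      card {v \<in> E x. flag (x @ [v])} = (if flag x then 2 else 0)"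
    and zeroE: "\<And>x n. 1 \<le> n \<Longrightarrow> x \<in> Cls P n \<Longrightarrow> Inv x \<Longrightarrow>
      card {v \<in> E x. zero (x @ [v])} = (if zero x then 1 else 0)"
    and zero_flag: "\<And>x n. 1 \<le> n \<Longrightarrow> x \<in> Cls P n \<Longrightarrow> Inv x \<Longrightarrow> zero x \<Longrightarrow> flag x"
    and flag0: "flag [0]" and zero0: "zero [0]"
begin

lemma zero_count: "1 \<le> n \<Longrightarrow> card {x \<in> Cls P n. zero x} = 1"
proof (induction n rule: nat_induct_at_least)
  case base
  have "{x \<in> Cls P 1. zero x} = {[0]}" using Cls_1[OF P4] zero0 by auto
  then show ?case by simp
next
  case (Suc n)
  have "card {x \<in> Cls P (Suc n). zero x} = (\<Sum>x\<in>Cls P n. card {v \<in> E x. zero (x @ [v])})"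
    by (rule count_step[OF Suc.hyps])
  also have "\<dots> = (\<Sum>x\<in>Cls P n. if zero x then 1 else 0)"
    using zeroE[OF Suc.hyps] inv_all[OF Suc.hyps] by (intro sum.cong) auto
  also have "\<dots> = 1" using Suc.IH finite_Cls by (simp add: sum_if_card)
  finally show ?case .
qed

lemma flag_count: "1 \<le> n \<Longrightarrow> card {x \<in> Cls P n. flag x} = 2 ^ (n - 1)"
proof (induction n rule: nat_induct_at_least)
  case base
  have "{x \<in> Cls P 1. flag x} = {[0]}" using Cls_1[OF P4] flag0 by auto
  then show ?case by simp
next
  case (Suc n)
  have "card {x \<in> Cls P (Suc n). flag x} = (\<Sum>x\<in>Cls P n. card {v \<in> E x. flag (x @ [v])})"
    by (rule count_step[OF Suc.hyps])
  also have "\<dots> = (\<Sum>x\<in>Cls P n. 2 * (if flag x then 1 else 0))"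
    using flagE[OF Suc.hyps] inv_all[OF Suc.hyps] by (intro sum.cong) auto
  also have "\<dots> = 2 * card {x \<in> Cls P n. flag x}"
    using finite_Cls by (simp add: sum_if_card sum_distrib_left[symmetric])
  also have "\<dots> = 2 ^ (Suc n - 1)" using Suc.IH Suc.hyps
    by (cases n) auto
  finally show ?case .
qed

lemma total_step:
  assumes n: "1 \<le> n"
  shows "card (Cls P (Suc n)) + 1 = 2 * card (Cls P n) + 2 ^ (n - 1)"
proof -
  have "card (Cls P (Suc n)) = card {y \<in> Cls P (Suc n). True}" by simp
  also have "\<dots> = (\<Sum>x\<in>Cls P n. card {v \<in> E x. True})"
    by (rule count_step[OF n])
  also have "\<dots> = (\<Sum>x\<in>Cls P n. 2 + (if flag x \<and> \<not> zero x then 1 else 0))"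
    using cardE[OF n] inv_all[OF n] by (intro sum.cong) auto
  also have "\<dots> = (\<Sum>x\<in>Cls P n. 2) + (\<Sum>x\<in>Cls P n. if flag x \<and> \<not> zero x then 1 else 0)"
    by (rule sum.distrib)
  also have "\<dots> = 2 * card (Cls P n) + card {x \<in> Cls P n. flag x \<and> \<not> zero x}"
    using sum_if_card[OF finite_Cls] by (simp only: sum_constant) simp
  finally have a: "card (Cls P (Suc n)) = 2 * card (Cls P n) + card {x \<in> Cls P n. flag x \<and> \<not> zero x}" .
  have "{x \<in> Cls P n. flag x} = {x \<in> Cls P n. flag x \<and> \<not> zero x} \<union> {x \<in> Cls P n. zero x}"
  proof (intro set_eqI iffI)
    fix x assume "x \<in> {x \<in> Cls P n. flag x}"
    then show "x \<in> {x \<in> Cls P n. flag x \<and> \<not> zero x} \<union> {x \<in> Cls P n. zero x}" by blast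
  next
    fix x assume x: "x \<in> {x \<in> Cls P n. flag x \<and> \<not> zero x} \<union> {x \<in> Cls P n. zero x}"
    show "x \<in> {x \<in> Cls P n. flag x}"
    proof (cases "zero x")
      case True
      then show ?thesis using x zero_flag[OF n _ inv_all[OF n]] by blast
    next
      case False
      then show ?thesis using x by blast
    qed
  qed
  then have "card {x \<in> Cls P n. flag x} = card {x \<in> Cls P n. flag x \<and> \<not> zero x} + card {x \<in> Cls P n. zero x}"
    using finite_Cls by (subst card_Un_disjoint[symmetric]) auto
  then show ?thesis using a flag_count[OF n] zero_count[OF n] by simp
qed

lemma total_formula: "1 \<le> n \<Longrightarrow> int (card (Cls P n)) = (int n - 1) * 2 ^ (n - 2) + 1"
proof (induction n rule: nat_induct_at_least)
  case base
  then show ?case using Cls_1[OF P4] by simp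
next
  case (Suc n)
  have h: "int (card (Cls P (Suc n))) + 1 = 2 * int (card (Cls P n)) + 2 ^ (n - 1)"
  proof -
    have "int (card (Cls P (Suc n)) + 1) = int (2 * card (Cls P n) + 2 ^ (n - 1))"
      using total_step[OF Suc.hyps] by (simp only:)
    then show ?thesis by simp
  qed
  show ?case
  proof (cases "n = 1")
    case True
    then show ?thesis using h Suc.IH by simp
  next
    case False
    then obtain m where m: "n = Suc (Suc m)" using Suc.hyps by (cases n; cases "n - 1") auto
    have IH: "int (card (Cls P n)) = (int m + 1) * 2 ^ m + 1" using Suc.IH m by simp
    have h2: "int (card (Cls P (Suc n))) + 1 = 2 * int (card (Cls P n)) + 2 * 2 ^ m"
      using h m by simp
    have "int (card (Cls P (Suc n))) = (int m + 2) * (2 * 2 ^ m) + 1"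
      using h2 IH by (simp add: algebra_simps)
    then show ?thesis using m by simp
  qed
qed

end

definition mx :: "nat list \<Rightarrow> nat" where "mx x = Max (set x)"

lemma mx_snoc: "x \<noteq> [] \<Longrightarrow> mx (x @ [v]) = max (mx x) v"
  unfolding mx_def by (simp add: max.commute)

lemma mx_ge: "i < length x \<Longrightarrow> x ! i \<le> mx x"
  unfolding mx_def by simp

lemma mx_in: "x \<noteq> [] \<Longrightarrow> \<exists>k<length x. x ! k = mx x"
  unfolding mx_def by (metis List.finite_set Max_in in_set_conv_nth set_empty)

lemma mx_single: "mx [a] = a" unfolding mx_def by simp

lemma Cls_asc: "x \<in> Cls P n \<Longrightarrow> ascent_seq x" unfolding Cls_def by simp
lemma Cls_len: "x \<in> Cls P n \<Longrightarrow> length x = n" unfolding Cls_def by simp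

lemma mx_le_asc: "x \<in> Cls P n \<Longrightarrow> mx x \<le> asc x"
  unfolding mx_def using max_le_asc Cls_asc by blast

lemma Cls_0: "x \<in> Cls P n \<Longrightarrow> x ! 0 = 0"
  using Cls_asc unfolding ascent_seq_def by blast

lemma nth_snoc_lt: "i < length x \<Longrightarrow> (x @ [v]) ! i = x ! i" by (simp add: nth_append)
lemma nth_snoc_eq: "(x @ [v]) ! length x = v" by simp

definition srt :: "nat list \<Rightarrow> bool" where
  "srt x \<longleftrightarrow> (\<forall>j l. j < l \<and> l < length x \<longrightarrow> x ! j \<le> x ! l)"

lemma srt_last: assumes "srt x" "x \<noteq> []" shows "last x = mx x"
proof -
  obtain k where k: "k < length x" "x ! k = mx x" using mx_in[OF assms(2)] by blast
  have "x ! k \<le> x ! (length x - 1)"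
  proof (cases "k = length x - 1")
    case True
    then show ?thesis by simp
  next
    case False
    then have "k < length x - 1" using k by simp
    then show ?thesis using assms(1)[unfolded srt_def, rule_format, of k "length x - 1"] k by simp
  qed
  moreover have "x ! (length x - 1) \<le> mx x" using assms(2) by (simp add: mx_ge)
  ultimately show ?thesis using k assms(2) by (simp add: last_conv_nth)
qed

lemma srt_snoc: assumes "x \<noteq> []" shows "srt (x @ [v]) \<longleftrightarrow> srt x \<and> last x \<le> v"
proof
  assume s: "srt (x @ [v])"
  have "srt x" unfolding srt_def
  proof (intro allI impI)
    fix j l assume "j < l \<and> l < length x"
    then show "x ! j \<le> x ! l" using s[unfolded srt_def, rule_format, of j l] by (simp add: nth_append)
  qed
  moreover have "last x \<le> v" using s[unfolded srt_def, rule_format, of "length x - 1" "length x"] assms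
    by (simp add: nth_append last_conv_nth)
  ultimately show "srt x \<and> last x \<le> v" by blast
next
  assume h: "srt x \<and> last x \<le> v"
  show "srt (x @ [v])" unfolding srt_def
  proof (intro allI impI)
    fix j l assume jl: "j < l \<and> l < length (x @ [v])"
    show "(x @ [v]) ! j \<le> (x @ [v]) ! l"
    proof (cases "l < length x")
      case True
      then show ?thesis using h jl unfolding srt_def by (simp add: nth_append)
    next
      case False
      then have l: "l = length x" using jl by simp
      have "x ! j \<le> last x" using h jl l assms unfolding srt_def
        by (cases "j = length x - 1") (auto simp: last_conv_nth)
      then show ?thesis using h jl l by (simp add: nth_append)
    qed
  qed
qed

abbreviation PD :: "nat list set" where "PD \<equiv> {[0,1,0,2], [0,1,2,0]}"

definition InvD :: "nat list \<Rightarrow> bool" where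
  "InvD x \<longleftrightarrow> x \<noteq> [] \<and>
    (\<forall>j l. j < l \<and> l < length x \<and> x ! l < x ! j \<longrightarrow> x ! j = mx x \<and> x ! l + 1 = mx x) \<and>
    (\<forall>l<length x. 0 < x ! l \<longrightarrow> (\<exists>j<l. x ! j + 1 = x ! l)) \<and>
    (srt x \<longrightarrow> asc x \<le> mx x)"

definition ED :: "nat list \<Rightarrow> nat set" where
  "ED x = {mx x - 1, mx x} \<union> (if srt x then {mx x + 1} else {})"

lemma down_closed:
  fixes x :: "nat list"
  assumes D2: "\<forall>l<length x. 0 < x ! l \<longrightarrow> (\<exists>j<l. x ! j + 1 = x ! l)"
  shows "l < length x \<Longrightarrow> u < x ! l \<Longrightarrow> \<exists>i<l. x ! i = u"
proof (induction l rule: less_induct)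
  case (less l)
  have "0 < x ! l" using less.prems(2) by linarith
  then obtain j where j: "j < l" "x ! j + 1 = x ! l" using D2 less.prems(1) by blast
  show ?case
  proof (cases "u = x ! j")
    case True
    then show ?thesis using j by blast
  next
    case False
    then have "u < x ! j" using j less.prems by simp
    then obtain i where i: "i < j" "x ! i = u" using less.IH[of j] j less.prems by auto
    have "i < l" using i j by simp
    then show ?thesis using i by blast
  qed
qed

lemma PD_simp: "(\<forall>p\<in>PD. \<not> occ3 x (\<lambda>a b c. red [a,b,c,v] = p)) \<longleftrightarrow>
   \<not> occ3 x (\<lambda>a b c. a < b \<and> c = a \<and> b < v) \<and> \<not> occ3 x (\<lambda>a b c. a < b \<and> b < c \<and> v = a)"
  by (simp only: ball_simps p0102 p0120 simp_thms)

lemma D_ext: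
  assumes x: "x \<in> Cls PD n" and I: "InvD x"
  shows "(v \<le> 1 + asc x \<and> (\<forall>p\<in>PD. \<not> occ3 x (\<lambda>a b c. red [a,b,c,v] = p))) \<longleftrightarrow> v \<in> ED x"
proof -
  let ?M = "mx x"
  have xne: "x \<noteq> []" and D1: "\<And>j l. j < l \<Longrightarrow> l < length x \<Longrightarrow> x ! l < x ! j \<Longrightarrow> x ! j = ?M \<and> x ! l + 1 = ?M"
    and D2: "\<forall>l<length x. 0 < x ! l \<longrightarrow> (\<exists>j<l. x ! j + 1 = x ! l)"
    and D3: "srt x \<Longrightarrow> asc x \<le> ?M" using I unfolding InvD_def by blast+
  have Mle: "?M \<le> asc x" using mx_le_asc[OF x] .
  show ?thesis unfolding PD_simp
  proof
    assume h: "v \<le> 1 + asc x \<and> \<not> occ3 x (\<lambda>a b c. a < b \<and> c = a \<and> b < v) \<and> \<not> occ3 x (\<lambda>a b c. a < b \<and> b < c \<and> v = a)"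
    show "v \<in> ED x"
    proof (rule ccontr)
      assume nv: "v \<notin> ED x"
      consider (lo) "v + 1 < ?M" | (hi) "?M < v" | (mid) "?M \<le> v + 1 \<and> v \<le> ?M" by linarith
      then show False
      proof cases
        case lo
        obtain k where k: "k < length x" "x ! k = ?M" using mx_in[OF xne] by blast
        obtain j where j: "j < k" "x ! j = v + 1" using down_closed[OF D2 k(1), of "v+1"] k lo by auto
        obtain i where i: "i < j" "x ! i = v" using down_closed[OF D2, of j v] j k by auto
        have "occ3 x (\<lambda>a b c. a < b \<and> b < c \<and> v = a)"
          by (rule occ3I[of i j k]) (use i j k lo in auto)
        then show False using h by blast
      next
        case hi
        show False
        proof (cases "srt x")
          case True
          then have "v = ?M + 1" using hi h D3 by linarith
          then show False using nv True unfolding ED_def by simp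
        next
          case False
          then obtain j l where jl: "j < l" "l < length x" "x ! l < x ! j" unfolding srt_def by auto
          have e: "x ! j = ?M" "x ! l + 1 = ?M" using D1[OF jl] by auto
          obtain i where i: "i < j" "x ! i = x ! l" using down_closed[OF D2, of j "x ! l"] jl by auto
          have "occ3 x (\<lambda>a b c. a < b \<and> c = a \<and> b < v)"
            by (rule occ3I[of i j l]) (use i jl e hi in auto)
          then show False using h by blast
        qed
      next
        case mid
        then have "v = ?M - 1 \<or> v = ?M" by linarith
        then show False using nv unfolding ED_def by auto
      qed
    qed
  next
    assume v: "v \<in> ED x"
    have vM: "?M \<le> v + 1" "v \<le> ?M + 1" and vs: "v = ?M + 1 \<Longrightarrow> srt x"
      using v unfolding ED_def by (auto split: if_splits)
    have "v \<le> 1 + asc x" using vM Mle by linarith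
    moreover have "\<not> occ3 x (\<lambda>a b c. a < b \<and> c = a \<and> b < v)"
    proof
      assume "occ3 x (\<lambda>a b c. a < b \<and> c = a \<and> b < v)"
      then obtain i j k where ijk: "i < j" "j < k" "k < length x" "x ! i < x ! j" "x ! k = x ! i" "x ! j < v"
        unfolding occ3_def by blast
      have "x ! j = ?M" using D1[of j k] ijk by auto
      then have "v = ?M + 1" using ijk vM by linarith
      then have "srt x" using vs by blast
      then show False using ijk unfolding srt_def by fastforce
    qed
    moreover have "\<not> occ3 x (\<lambda>a b c. a < b \<and> b < c \<and> v = a)"
    proof
      assume "occ3 x (\<lambda>a b c. a < b \<and> b < c \<and> v = a)"
      then obtain i j k where ijk: "i < j" "j < k" "k < length x" "x ! i < x ! j" "x ! j < x ! k" "v = x ! i"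
        unfolding occ3_def by blast
      have "x ! k \<le> ?M" using mx_ge ijk by blast
      then show False using ijk vM by linarith
    qed
    ultimately show "v \<le> 1 + asc x \<and> \<not> occ3 x (\<lambda>a b c. a < b \<and> c = a \<and> b < v) \<and> \<not> occ3 x (\<lambda>a b c. a < b \<and> b < c \<and> v = a)"
      by blast
  qed
qed


lemma set_le_mx:
  assumes D2: "\<forall>l<length x. 0 < x ! l \<longrightarrow> (\<exists>j<l. x ! j + 1 = x ! l)" and xne: "x \<noteq> []"
    and u: "u \<le> mx x"
  shows "\<exists>i<length x. x ! i = u"
proof -
  obtain k where k: "k < length x" "x ! k = mx x" using mx_in[OF xne] by blast
  show ?thesis
  proof (cases "u = mx x")
    case True then show ?thesis using k by blast
  next
    case False
    then obtain i where "i < k" "x ! i = u" using down_closed[OF D2 k(1), of u] k u by auto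
    then show ?thesis using k by (metis less_trans)
  qed
qed

lemma D_step:
  assumes x: "x \<in> Cls PD n" and I: "InvD x" and v: "v \<in> ED x"
  shows "InvD (x @ [v])"
proof -
  let ?M = "mx x"
  have xne: "x \<noteq> []" and D1: "\<And>j l. j < l \<Longrightarrow> l < length x \<Longrightarrow> x ! l < x ! j \<Longrightarrow> x ! j = ?M \<and> x ! l + 1 = ?M"
    and D2: "\<forall>l<length x. 0 < x ! l \<longrightarrow> (\<exists>j<l. x ! j + 1 = x ! l)"
    and D3: "srt x \<Longrightarrow> asc x \<le> ?M" using I unfolding InvD_def by blast+
  have vM: "?M \<le> v + 1" "v \<le> ?M + 1" and vs: "v = ?M + 1 \<Longrightarrow> srt x"
    using v unfolding ED_def by (auto split: if_splits)
  have M': "mx (x @ [v]) = max ?M v" using mx_snoc[OF xne] .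
  let ?y = "x @ [v]"
  have N1: "?y ! j = mx ?y \<and> ?y ! l + 1 = mx ?y" if jl: "j < l" "l < length ?y" "?y ! l < ?y ! j" for j l
  proof (cases "l < length x")
    case True
    then have h: "x ! l < x ! j" using jl by (simp add: nth_append)
    have e: "x ! j = ?M" "x ! l + 1 = ?M" using D1[OF jl(1) True h] by auto
    have "\<not> srt x" using h jl(1) True unfolding srt_def by fastforce
    then have "v \<le> ?M" using vs vM by linarith
    then show ?thesis using e jl True M' by (simp add: nth_append max_def)
  next
    case False
    then have l: "l = length x" using jl by simp
    have jx: "j < length x" using jl l by simp
    have h: "v < x ! j" using jl l jx by (simp add: nth_append)
    have "x ! j \<le> ?M" using mx_ge[OF jx] .
    then have "x ! j = ?M" "v + 1 = ?M" using h vM by linarith+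
    then show ?thesis using l jx M' by (simp add: nth_append max_def)
  qed
  have N2: "\<exists>j<l. ?y ! j + 1 = ?y ! l" if l: "l < length ?y" "0 < ?y ! l" for l
  proof (cases "l < length x")
    case True
    have yl: "?y ! l = x ! l" using True by (rule nth_snoc_lt)
    then have "0 < x ! l" using l(2) by simp
    then obtain j where j: "j < l" "x ! j + 1 = x ! l" using D2 True by blast
    have "?y ! j = x ! j" using j True by (intro nth_snoc_lt) simp
    then show ?thesis using j yl by metis
  next
    case False
    then have ll: "l = length x" using l by simp
    then have "0 < v" using l by simp
    then have "v - 1 \<le> ?M" using vM by linarith
    then obtain i where i: "i < length x" "x ! i = v - 1" using set_le_mx[OF D2 xne] by blast
    have "?y ! i = v - 1" using i by (simp add: nth_snoc_lt)
    moreover have "?y ! l = v" using ll by simp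
    ultimately have "?y ! i + 1 = ?y ! l" using \<open>0 < v\<close> by simp
    then show ?thesis using i ll by blast
  qed
  have N3: "asc ?y \<le> mx ?y" if s: "srt ?y"
  proof -
    have sx: "srt x" "last x \<le> v" using s srt_snoc[OF xne] by auto
    have lM: "last x = ?M" using srt_last[OF sx(1) xne] .
    show ?thesis
    proof (cases "last x < v")
      case True
      then have "v = ?M + 1" using lM vM by linarith
      then show ?thesis using asc_snoc[OF xne, of v] True D3[OF sx(1)] M' by simp
    next
      case False
      then show ?thesis using asc_snoc[OF xne, of v] D3[OF sx(1)] M' by simp
    qed
  qed
  show ?thesis unfolding InvD_def using N1 N2 N3 by blast
qed

lemma mx0_srt: assumes "mx x = 0" shows "srt x"
  unfolding srt_def
proof (intro allI impI)
  fix j l assume "j < l \<and> l < length x"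
  then have "x ! j \<le> mx x" using mx_ge[of j x] by simp
  then show "x ! j \<le> x ! l" using assms by simp
qed

lemma ED_card: "card (ED x) = (if srt x \<and> mx x \<noteq> 0 then 3 else 2)"
proof (cases "mx x")
  case 0
  then have "ED x = {0, 1}" using mx0_srt[of x] unfolding ED_def by auto
  then show ?thesis using 0 by simp
next
  case (Suc m)
  show ?thesis
  proof (cases "srt x")
    case True
    then have "ED x = {m, Suc m, Suc (Suc m)}" using Suc unfolding ED_def by auto
    then show ?thesis using True Suc by simp
  next
    case False
    then have "ED x = {m, Suc m}" using Suc unfolding ED_def by auto
    then show ?thesis using False Suc by simp
  qed
qed

interpretation D: flagcls PD ED InvD srt "\<lambda>x. mx x = 0"
proof
  show "\<forall>p\<in>PD. length p = 4" by simp
  have "asc [0] = 0" by (simp add: asc_def)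
  then show "InvD [0]" unfolding InvD_def by (simp add: mx_single)
next
  fix x n v assume "1 \<le> n" "x \<in> Cls PD n" "InvD x"
  then show "(v \<le> 1 + asc x \<and> (\<forall>p\<in>PD. \<not> occ3 x (\<lambda>a b c. red [a,b,c,v] = p))) \<longleftrightarrow> v \<in> ED x"
    using D_ext by blast
next
  fix x n v assume "1 \<le> n" "x \<in> Cls PD n" "InvD x" "v \<in> ED x"
  then show "InvD (x @ [v])" using D_step by blast
next
  fix x n assume "1 \<le> n" "x \<in> Cls PD n" "InvD x"
  then show "finite (ED x)" unfolding ED_def by simp
next
  fix x n assume "1 \<le> n" "x \<in> Cls PD n" "InvD x"
  show "card (ED x) = (if srt x \<and> \<not> mx x = 0 then 3 else 2)"
    by (rule ED_card)
next
  fix x n assume n: "1 \<le> n" and x: "x \<in> Cls PD n" and I: "InvD x"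
  have xne: "x \<noteq> []" using I unfolding InvD_def by blast
  show "card {v \<in> ED x. srt (x @ [v])} = (if srt x then 2 else 0)"
  proof (cases "srt x")
    case True
    have e: "\<And>v. srt (x @ [v]) \<longleftrightarrow> mx x \<le> v" using srt_snoc[OF xne] srt_last[OF True xne] True by simp
    have "{v \<in> ED x. srt (x @ [v])} = {v \<in> ED x. mx x \<le> v}" using e by simp
    also have "\<dots> = {mx x, mx x + 1}" unfolding ED_def using True by auto
    finally have "{v \<in> ED x. srt (x @ [v])} = {mx x, mx x + 1}" .
    then show ?thesis using True by simp
  next
    case False
    then show ?thesis using srt_snoc[OF xne] by simp
  qed
next
  fix x n assume n: "1 \<le> n" and x: "x \<in> Cls PD n" and I: "InvD x"
  have xne: "x \<noteq> []" using I unfolding InvD_def by blast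
  show "card {v \<in> ED x. mx (x @ [v]) = 0} = (if mx x = 0 then 1 else 0)"
  proof (cases "mx x = 0")
    case True
    have e: "\<And>v. mx (x @ [v]) = 0 \<longleftrightarrow> v = 0" using True mx_snoc[OF xne] by simp
    have "{v \<in> ED x. mx (x @ [v]) = 0} = {v \<in> ED x. v = 0}" using e by simp
    also have "\<dots> = {0}" unfolding ED_def using True by auto
    finally have "{v \<in> ED x. mx (x @ [v]) = 0} = {0}" .
    then show ?thesis using True by simp
  next
    case False
    then show ?thesis using mx_snoc[OF xne] by simp
  qed
next
  fix x n assume "1 \<le> n" "x \<in> Cls PD n" "InvD x" "mx x = 0"
  then show "srt x" using mx0_srt by blast
next
  show "srt [0]" by (simp add: srt_def)
  show "mx [0] = 0" by (simp add: mx_single)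
qed

definition rf :: "nat list \<Rightarrow> bool" where
  "rf x \<longleftrightarrow> (\<forall>j k. j < k \<and> k < length x \<and> x ! j = x ! k \<longrightarrow> x ! j = 0)"

lemma rf_snoc: "rf (x @ [v]) \<longleftrightarrow> rf x \<and> (v = 0 \<or> (\<forall>j<length x. x ! j \<noteq> v))"
proof
  assume r: "rf (x @ [v])"
  have "rf x" unfolding rf_def
  proof (intro allI impI)
    fix j k assume "j < k \<and> k < length x \<and> x ! j = x ! k"
    then show "x ! j = 0" using r[unfolded rf_def, rule_format, of j k] by (simp add: nth_append)
  qed
  moreover have "v = 0 \<or> (\<forall>j<length x. x ! j \<noteq> v)"
  proof (rule ccontr)
    assume "\<not> (v = 0 \<or> (\<forall>j<length x. x ! j \<noteq> v))"
    then obtain j where j: "j < length x" "x ! j = v" "v \<noteq> 0" by blast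
    then show False using r[unfolded rf_def, rule_format, of j "length x"] by (simp add: nth_append)
  qed
  ultimately show "rf x \<and> (v = 0 \<or> (\<forall>j<length x. x ! j \<noteq> v))" by blast
next
  assume h: "rf x \<and> (v = 0 \<or> (\<forall>j<length x. x ! j \<noteq> v))"
  show "rf (x @ [v])" unfolding rf_def
  proof (intro allI impI)
    fix j k assume jk: "j < k \<and> k < length (x @ [v]) \<and> (x @ [v]) ! j = (x @ [v]) ! k"
    show "(x @ [v]) ! j = 0"
    proof (cases "k < length x")
      case True
      have j: "j < length x" using jk True by simp
      have "x ! j = x ! k" using jk True j by (simp add: nth_append)
      then have "x ! j = 0" using h jk True unfolding rf_def by blast
      then show ?thesis using j by (simp add: nth_append)
    next
      case False
      then have k: "k = length x" using jk by simp
      have j: "j < length x" using jk k by simp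
      have "x ! j = v" using jk k j by (simp add: nth_append)
      then show ?thesis using h j by (auto simp: nth_append)
    qed
  qed
qed

lemma mx0_rf: assumes "mx x = 0" shows "rf x"
  unfolding rf_def
proof (intro allI impI)
  fix j k assume "j < k \<and> k < length x \<and> x ! j = x ! k"
  then have "x ! j \<le> mx x" using mx_ge[of j x] by simp
  then show "x ! j = 0" using assms by simp
qed

abbreviation PC :: "nat list set" where "PC \<equiv> {[0,1,2,1], [0,1,1,2]}"

definition InvC :: "nat list \<Rightarrow> bool" where
  "InvC x \<longleftrightarrow> x \<noteq> [] \<and> x ! 0 = 0 \<and>
    (\<forall>u. 0 < u \<and> u < mx x \<longrightarrow> (\<exists>j k. j < k \<and> k < length x \<and> x ! j = u \<and> u < x ! k)) \<and>
    (\<forall>j k. j < k \<and> k < length x \<and> x ! j = x ! k \<and> 0 < x ! j \<longrightarrow> x ! j = mx x) \<and>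
    (rf x \<longrightarrow> asc x \<le> mx x)"

definition EC :: "nat list \<Rightarrow> nat set" where
  "EC x = {0, mx x} \<union> (if rf x then {mx x + 1} else {})"

lemma PC_simp: "(\<forall>p\<in>PC. \<not> occ3 x (\<lambda>a b c. red [a,b,c,v] = p)) \<longleftrightarrow>
   \<not> occ3 x (\<lambda>a b c. a < b \<and> b < c \<and> v = b) \<and> \<not> occ3 x (\<lambda>a b c. a < b \<and> c = b \<and> b < v)"
  by (simp only: ball_simps p0121 p0112 simp_thms)

lemma C_ext:
  assumes x: "x \<in> Cls PC n" and I: "InvC x"
  shows "(v \<le> 1 + asc x \<and> (\<forall>p\<in>PC. \<not> occ3 x (\<lambda>a b c. red [a,b,c,v] = p))) \<longleftrightarrow> v \<in> EC x"
proof -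
  let ?M = "mx x"
  have xne: "x \<noteq> []" and x0: "x ! 0 = 0"
    and C2: "\<And>u. 0 < u \<Longrightarrow> u < ?M \<Longrightarrow> (\<exists>j k. j < k \<and> k < length x \<and> x ! j = u \<and> u < x ! k)"
    and C3: "\<And>j k. j < k \<Longrightarrow> k < length x \<Longrightarrow> x ! j = x ! k \<Longrightarrow> 0 < x ! j \<Longrightarrow> x ! j = ?M"
    and C4: "rf x \<Longrightarrow> asc x \<le> ?M" using I unfolding InvC_def by blast+
  have Mle: "?M \<le> asc x" using mx_le_asc[OF x] .
  show ?thesis unfolding PC_simp
  proof
    assume h: "v \<le> 1 + asc x \<and> \<not> occ3 x (\<lambda>a b c. a < b \<and> b < c \<and> v = b) \<and> \<not> occ3 x (\<lambda>a b c. a < b \<and> c = b \<and> b < v)"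
    show "v \<in> EC x"
    proof (rule ccontr)
      assume nv: "v \<notin> EC x"
      then have v0: "v \<noteq> 0" "v \<noteq> ?M" unfolding EC_def by auto
      consider (lo) "v < ?M" | (hi) "?M < v" using v0 by linarith
      then show False
      proof cases
        case lo
        obtain j k where jk: "j < k" "k < length x" "x ! j = v" "v < x ! k" using C2[of v] lo v0 by auto
        have "0 < j" using jk x0 v0 by (cases j) auto
        have "occ3 x (\<lambda>a b c. a < b \<and> b < c \<and> v = b)"
          by (rule occ3I[of 0 j k]) (use jk x0 v0 \<open>0 < j\<close> in auto)
        then show False using h by blast
      next
        case hi
        show False
        proof (cases "rf x")
          case True
          then have "v = ?M + 1" using hi h C4 by linarith
          then show False using nv True unfolding EC_def by simp
        next
          case False
          then obtain j k where jk: "j < k" "k < length x" "x ! j = x ! k" "x ! j \<noteq> 0" unfolding rf_def by blast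
          have "0 < j" using jk x0 by (cases j) auto
          have "x ! j \<le> ?M" using mx_ge jk by (meson less_trans)
          have "occ3 x (\<lambda>a b c. a < b \<and> c = b \<and> b < v)"
            by (rule occ3I[of 0 j k]) (use jk x0 \<open>0 < j\<close> \<open>x ! j \<le> ?M\<close> hi in auto)
          then show False using h by blast
        qed
      qed
    qed
  next
    assume v: "v \<in> EC x"
    have vM: "v = 0 \<or> v = ?M \<or> (v = ?M + 1 \<and> rf x)"
      using v unfolding EC_def by (auto split: if_splits)
    have "v \<le> 1 + asc x" using vM Mle by auto
    moreover have "\<not> occ3 x (\<lambda>a b c. a < b \<and> b < c \<and> v = b)"
    proof
      assume "occ3 x (\<lambda>a b c. a < b \<and> b < c \<and> v = b)"
      then obtain i j k where ijk: "i < j" "j < k" "k < length x" "x ! i < x ! j" "x ! j < x ! k" "v = x ! j"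
        unfolding occ3_def by blast
      have "x ! k \<le> ?M" using mx_ge ijk by blast
      then show False using ijk vM by auto
    qed
    moreover have "\<not> occ3 x (\<lambda>a b c. a < b \<and> c = b \<and> b < v)"
    proof
      assume "occ3 x (\<lambda>a b c. a < b \<and> c = b \<and> b < v)"
      then obtain i j k where ijk: "i < j" "j < k" "k < length x" "x ! i < x ! j" "x ! k = x ! j" "x ! j < v"
        unfolding occ3_def by blast
      have jM: "x ! j = ?M" using C3[of j k] ijk by auto
      show False
      proof (cases "v = ?M + 1")
        case True
        then have "rf x" using vM by auto
        then have "x ! j = 0" using ijk unfolding rf_def by (metis less_trans)
        then show False using ijk by simp
      next
        case False
        then show False using vM ijk jM by auto
      qed
    qed
    ultimately show "v \<le> 1 + asc x \<and> \<not> occ3 x (\<lambda>a b c. a < b \<and> b < c \<and> v = b) \<and> \<not> occ3 x (\<lambda>a b c. a < b \<and> c = b \<and> b < v)"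
      by blast
  qed
qed


lemma C_step:
  assumes x: "x \<in> Cls PC n" and I: "InvC x" and v: "v \<in> EC x"
  shows "InvC (x @ [v])"
proof -
  let ?M = "mx x"
  let ?y = "x @ [v]"
  have xne: "x \<noteq> []" and x0: "x ! 0 = 0"
    and C2: "\<And>u. 0 < u \<Longrightarrow> u < ?M \<Longrightarrow> (\<exists>j k. j < k \<and> k < length x \<and> x ! j = u \<and> u < x ! k)"
    and C3: "\<And>j k. j < k \<Longrightarrow> k < length x \<Longrightarrow> x ! j = x ! k \<Longrightarrow> 0 < x ! j \<Longrightarrow> x ! j = ?M"
    and C4: "rf x \<Longrightarrow> asc x \<le> ?M" using I unfolding InvC_def by blast+
  have vM: "v = 0 \<or> v = ?M \<or> (v = ?M + 1 \<and> rf x)"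
    using v unfolding EC_def by (auto split: if_splits)
  have M': "mx ?y = max ?M v" using mx_snoc[OF xne] .
  have y0: "?y ! 0 = 0" using xne x0 by (simp add: nth_append)
  have N2: "\<exists>j k. j < k \<and> k < length ?y \<and> ?y ! j = u \<and> u < ?y ! k" if u: "0 < u" "u < mx ?y" for u
  proof (cases "v = ?M + 1")
    case False
    then have "mx ?y = ?M" using M' vM by auto
    then obtain j k where jk: "j < k" "k < length x" "x ! j = u" "u < x ! k" using C2 u by metis
    have "?y ! j = u" "?y ! k = x ! k" using jk by (simp_all add: nth_append)
    then show ?thesis using jk by (intro exI[of _ j] exI[of _ k]) simp
  next
    case True
    then have My: "mx ?y = ?M + 1" using M' by simp
    show ?thesis
    proof (cases "u < ?M")
      case True
      then obtain j k where jk: "j < k" "k < length x" "x ! j = u" "u < x ! k" using C2 u by metis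
      have "?y ! j = u" "?y ! k = x ! k" using jk by (simp_all add: nth_append)
      then show ?thesis using jk by (intro exI[of _ j] exI[of _ k]) simp
    next
      case False
      then have uM: "u = ?M" using u My by simp
      obtain j where j: "j < length x" "x ! j = ?M" using mx_in[OF xne] by blast
      have "?y ! j = u" using j uM by (simp add: nth_append)
      moreover have "?y ! length x = ?M + 1" using \<open>v = ?M + 1\<close> by simp
      ultimately show ?thesis using j uM by (intro exI[of _ j] exI[of _ "length x"]) simp
    qed
  qed
  have N3: "?y ! j = mx ?y" if jk: "j < k" "k < length ?y" "?y ! j = ?y ! k" "0 < ?y ! j" for j k
  proof (cases "k < length x")
    case True
    have e: "?y ! j = x ! j" "?y ! k = x ! k" using jk True by (simp_all add: nth_append)
    then have xj: "x ! j = ?M" using C3[of j k] jk True by simp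
    have "v \<noteq> ?M + 1"
    proof
      assume "v = ?M + 1"
      then have "rf x" using vM by auto
      then have "x ! j = 0" using jk True e unfolding rf_def by auto
      then show False using jk e by simp
    qed
    then have "mx ?y = ?M" using M' vM by auto
    then show ?thesis using e xj by simp
  next
    case False
    then have k: "k = length x" using jk by simp
    have j: "j < length x" using jk k by simp
    have e: "x ! j = v" using jk k j by (simp add: nth_append)
    have "x ! j \<le> ?M" using mx_ge[OF j] .
    then have "v = ?M" using vM e jk j by (auto simp: nth_append)
    then show ?thesis using e j M' by (simp add: nth_append)
  qed
  have N4: "asc ?y \<le> mx ?y" if r: "rf ?y"
  proof -
    have rx: "rf x" and rv: "v = 0 \<or> (\<forall>j<length x. x ! j \<noteq> v)" using r rf_snoc by auto
    have "v = 0 \<or> v = ?M + 1"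
    proof (rule ccontr)
      assume "\<not> (v = 0 \<or> v = ?M + 1)"
      then have "v = ?M" "v \<noteq> 0" using vM by auto
      then show False using rv mx_in[OF xne] by metis
    qed
    then show ?thesis
    proof
      assume "v = 0"
      then show ?thesis using asc_snoc[OF xne, of v] C4[OF rx] M' by simp
    next
      assume "v = ?M + 1"
      then show ?thesis using asc_snoc[OF xne, of v] C4[OF rx] M' by simp
    qed
  qed
  show ?thesis unfolding InvC_def using y0 N2 N3 N4 by blast
qed

lemma EC_card:
  shows "card (EC x) = (if rf x \<and> mx x \<noteq> 0 then 3 else 2)"
proof (cases "mx x")
  case 0
  then have "EC x = {0, 1}" using mx0_rf[of x] unfolding EC_def by auto
  then show ?thesis using 0 by simp
next
  case (Suc m)
  show ?thesis
  proof (cases "rf x")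
    case True
    then have "EC x = {0, Suc m, Suc (Suc m)}" using Suc unfolding EC_def by auto
    then show ?thesis using True Suc by simp
  next
    case False
    then have "EC x = {0, Suc m}" using Suc unfolding EC_def by auto
    then show ?thesis using False Suc by simp
  qed
qed

interpretation C: flagcls PC EC InvC rf "\<lambda>x. mx x = 0"
proof
  show "\<forall>p\<in>PC. length p = 4" by simp
  have "asc [0] = 0" by (simp add: asc_def)
  then show "InvC [0]" unfolding InvC_def by (simp add: mx_single)
next
  fix x n v assume "1 \<le> n" "x \<in> Cls PC n" "InvC x"
  then show "(v \<le> 1 + asc x \<and> (\<forall>p\<in>PC. \<not> occ3 x (\<lambda>a b c. red [a,b,c,v] = p))) \<longleftrightarrow> v \<in> EC x"
    using C_ext by blast
next
  fix x n v assume "1 \<le> n" "x \<in> Cls PC n" "InvC x" "v \<in> EC x"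
  then show "InvC (x @ [v])" using C_step by blast
next
  fix x n assume "1 \<le> n" "x \<in> Cls PC n" "InvC x"
  then show "finite (EC x)" unfolding EC_def by simp
next
  fix x n assume "1 \<le> n" "x \<in> Cls PC n" "InvC x"
  show "card (EC x) = (if rf x \<and> \<not> mx x = 0 then 3 else 2)"
    by (rule EC_card)
next
  fix x n assume n: "1 \<le> n" and x: "x \<in> Cls PC n" and I: "InvC x"
  have xne: "x \<noteq> []" using I unfolding InvC_def by blast
  show "card {v \<in> EC x. rf (x @ [v])} = (if rf x then 2 else 0)"
  proof (cases "rf x")
    case True
    have "{v \<in> EC x. rf (x @ [v])} = {0, mx x + 1}"
    proof (intro set_eqI iffI)
      fix v assume "v \<in> {v \<in> EC x. rf (x @ [v])}"
      then have v: "v \<in> EC x" "rf (x @ [v])" by auto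
      have "v \<noteq> mx x \<or> v = 0"
        using v(2) rf_snoc[of x v] mx_in[OF xne] by metis
      then show "v \<in> {0, mx x + 1}" using v(1) True unfolding EC_def by auto
    next
      fix v assume v: "v \<in> {0, mx x + 1}"
      have "v \<in> EC x" using v True unfolding EC_def by auto
      moreover have "v = 0 \<or> (\<forall>j<length x. x ! j \<noteq> v)"
        using v mx_ge[of _ x] by (metis insert_iff less_add_one not_le singletonD)
      ultimately show "v \<in> {v \<in> EC x. rf (x @ [v])}" using True rf_snoc by simp
    qed
    then show ?thesis using True by simp
  next
    case False
    then show ?thesis using rf_snoc by simp
  qed
next
  fix x n assume n: "1 \<le> n" and x: "x \<in> Cls PC n" and I: "InvC x"
  have xne: "x \<noteq> []" using I unfolding InvC_def by blast
  show "card {v \<in> EC x. mx (x @ [v]) = 0} = (if mx x = 0 then 1 else 0)"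
  proof (cases "mx x = 0")
    case True
    have e: "\<And>v. mx (x @ [v]) = 0 \<longleftrightarrow> v = 0" using True mx_snoc[OF xne] by simp
    have "{v \<in> EC x. mx (x @ [v]) = 0} = {v \<in> EC x. v = 0}" using e by simp
    also have "\<dots> = {0}" unfolding EC_def by auto
    finally have "{v \<in> EC x. mx (x @ [v]) = 0} = {0}" .
    then show ?thesis using True by simp
  next
    case False
    then show ?thesis using mx_snoc[OF xne] by simp
  qed
next
  fix x n assume "1 \<le> n" "x \<in> Cls PC n" "InvC x" "mx x = 0"
  then show "rf x" using mx0_rf by blast
next
  show "rf [0]" by (simp add: rf_def)
  show "mx [0] = 0" by (simp add: mx_single)
qed

lemma recur_formula:
  fixes a :: "nat \<Rightarrow> nat"
  assumes a1: "a 1 = 1" and st: "\<And>n. 1 \<le> n \<Longrightarrow> a (Suc n) + 1 = 2 * a n + 2 ^ (n - 1)"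
  shows "1 \<le> n \<Longrightarrow> int (a n) = (int n - 1) * 2 ^ (n - 2) + 1"
proof (induction n rule: nat_induct_at_least)
  case base
  then show ?case using a1 by simp
next
  case (Suc n)
  have h: "int (a (Suc n)) + 1 = 2 * int (a n) + 2 ^ (n - 1)"
  proof -
    have "int (a (Suc n) + 1) = int (2 * a n + 2 ^ (n - 1))"
      using st[OF Suc.hyps] by (simp only:)
    then show ?thesis by simp
  qed
  show ?case
  proof (cases "n = 1")
    case True
    then show ?thesis using h Suc.IH by simp
  next
    case False
    then obtain m where m: "n = Suc (Suc m)" using Suc.hyps by (cases n; cases "n - 1") auto
    have IH: "int (a n) = (int m + 1) * 2 ^ m + 1" using Suc.IH m by simp
    have h2: "int (a (Suc n)) + 1 = 2 * int (a n) + 2 * 2 ^ m"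
      using h m by simp
    have "int (a (Suc n)) = (int m + 2) * (2 * 2 ^ m) + 1"
      using h2 IH by (simp add: algebra_simps)
    then show ?thesis using m by simp
  qed
qed

definition stB :: "nat list \<Rightarrow> bool" where
  "stB x \<longleftrightarrow> (\<forall>i. Suc i < length x \<longrightarrow> x ! Suc i = Suc (x ! i) \<or> (x ! Suc i = 0 \<and> x ! i = 0))"

definition Rtrip :: "nat list \<Rightarrow> nat \<Rightarrow> nat \<Rightarrow> nat \<Rightarrow> bool" where
  "Rtrip x i j k \<longleftrightarrow> i < j \<and> j < k \<and> k < length x \<and> x ! i < x ! j \<and> (x ! k = x ! i \<or> x ! k = x ! j)"

lemma stB_snoc:
  assumes "x \<noteq> []"
  shows "stB (x @ [v]) \<longleftrightarrow> stB x \<and> (v = Suc (last x) \<or> (v = 0 \<and> last x = 0))"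
proof
  assume s: "stB (x @ [v])"
  have "stB x" unfolding stB_def
  proof (intro allI impI)
    fix i assume i: "Suc i < length x"
    then show "x ! Suc i = Suc (x ! i) \<or> (x ! Suc i = 0 \<and> x ! i = 0)"
      using s[unfolded stB_def, rule_format, of i] by (simp add: nth_append)
  qed
  moreover have "v = Suc (last x) \<or> (v = 0 \<and> last x = 0)"
    using s[unfolded stB_def, rule_format, of "length x - 1"] assms
    by (simp add: nth_append last_conv_nth)
  ultimately show "stB x \<and> (v = Suc (last x) \<or> (v = 0 \<and> last x = 0))" by blast
next
  assume h: "stB x \<and> (v = Suc (last x) \<or> (v = 0 \<and> last x = 0))"
  show "stB (x @ [v])" unfolding stB_def
  proof (intro allI impI)
    fix i assume i: "Suc i < length (x @ [v])"
    show "(x @ [v]) ! Suc i = Suc ((x @ [v]) ! i) \<or> ((x @ [v]) ! Suc i = 0 \<and> (x @ [v]) ! i = 0)"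
    proof (cases "Suc i < length x")
      case True
      then show ?thesis using h unfolding stB_def by (simp add: nth_append)
    next
      case False
      then have "i = length x - 1" "Suc i = length x" using i by auto
      then show ?thesis using h assms by (simp add: nth_append last_conv_nth)
    qed
  qed
qed

lemma mx0_stB: assumes "mx x = 0" shows "stB x"
  unfolding stB_def
proof (intro allI impI)
  fix i assume "Suc i < length x"
  then have "x ! i \<le> mx x" "x ! Suc i \<le> mx x" using mx_ge[of _ x] by simp_all
  then show "x ! Suc i = Suc (x ! i) \<or> (x ! Suc i = 0 \<and> x ! i = 0)" using assms by simp
qed

lemma last_le_mx: "x \<noteq> [] \<Longrightarrow> last x \<le> mx x"
  by (simp add: last_conv_nth mx_ge)

abbreviation PB :: "nat list set" where "PB \<equiv> {[0,1,0,2], [0,1,1,2]}"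

definition InvB :: "nat list \<Rightarrow> bool" where
  "InvB x \<longleftrightarrow> x \<noteq> [] \<and> x ! 0 = 0 \<and>
    (\<forall>i j k. Rtrip x i j k \<longrightarrow> last x \<le> x ! j) \<and>
    (\<not> stB x \<longrightarrow> (\<exists>i j k. Rtrip x i j k \<and> x ! j \<le> max 1 (last x))) \<and>
    (\<forall>u \<le> mx x. \<exists>i<length x. x ! i = u) \<and>
    (stB x \<longrightarrow> (\<forall>i j k. \<not> Rtrip x i j k) \<and> last x = mx x \<and> asc x \<le> mx x)"

definition EB :: "nat list \<Rightarrow> nat set" where
  "EB x = (if stB x then {..mx x + 1} else {..max 1 (last x)})"

lemma PB_simp: "(\<forall>p\<in>PB. \<not> occ3 x (\<lambda>a b c. red [a,b,c,v] = p)) \<longleftrightarrow>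
   \<not> (\<exists>i j k. Rtrip x i j k \<and> x ! j < v)"
proof -
  have "(\<forall>p\<in>PB. \<not> occ3 x (\<lambda>a b c. red [a,b,c,v] = p)) \<longleftrightarrow>
   \<not> occ3 x (\<lambda>a b c. a < b \<and> c = a \<and> b < v) \<and> \<not> occ3 x (\<lambda>a b c. a < b \<and> c = b \<and> b < v)"
    by (simp only: ball_simps p0102 p0112 simp_thms)
  also have "\<dots> \<longleftrightarrow> \<not> (\<exists>i j k. Rtrip x i j k \<and> x ! j < v)"
    unfolding occ3_def Rtrip_def by blast
  finally show ?thesis .
qed

lemma B_ext:
  assumes x: "x \<in> Cls PB n" and I: "InvB x"
  shows "(v \<le> 1 + asc x \<and> (\<forall>p\<in>PB. \<not> occ3 x (\<lambda>a b c. red [a,b,c,v] = p))) \<longleftrightarrow> v \<in> EB x"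
proof -
  let ?M = "mx x"
  have xne: "x \<noteq> []"
    and B1: "\<And>i j k. Rtrip x i j k \<Longrightarrow> last x \<le> x ! j"
    and B2: "\<not> stB x \<Longrightarrow> (\<exists>i j k. Rtrip x i j k \<and> x ! j \<le> max 1 (last x))"
    and B4: "stB x \<Longrightarrow> (\<forall>i j k. \<not> Rtrip x i j k) \<and> last x = mx x \<and> asc x \<le> mx x"
    using I unfolding InvB_def by blast+
  have Mle: "?M \<le> asc x" using mx_le_asc[OF x] .
  have lM: "last x \<le> ?M" using last_le_mx[OF xne] .
  show ?thesis unfolding PB_simp
  proof
    assume h: "v \<le> 1 + asc x \<and> \<not> (\<exists>i j k. Rtrip x i j k \<and> x ! j < v)"
    show "v \<in> EB x"
    proof (cases "stB x")
      case True
      then have "v \<le> ?M + 1" using h B4 by linarith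
      then show ?thesis using True unfolding EB_def by simp
    next
      case False
      then obtain i j k where r: "Rtrip x i j k" "x ! j \<le> max 1 (last x)" using B2 by blast
      then have "\<not> x ! j < v" using h by blast
      then have "v \<le> max 1 (last x)" using r by linarith
      then show ?thesis using False unfolding EB_def by simp
    qed
  next
    assume v: "v \<in> EB x"
    show "v \<le> 1 + asc x \<and> \<not> (\<exists>i j k. Rtrip x i j k \<and> x ! j < v)"
    proof (cases "stB x")
      case True
      then have "v \<le> ?M + 1" using v unfolding EB_def by simp
      then show ?thesis using Mle B4[OF True] by auto
    next
      case False
      then have vb: "v \<le> max 1 (last x)" using v unfolding EB_def by simp
      have "v \<le> 1 + asc x" using vb lM Mle by linarith
      moreover have "\<not> (\<exists>i j k. Rtrip x i j k \<and> x ! j < v)"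
      proof
        assume "\<exists>i j k. Rtrip x i j k \<and> x ! j < v"
        then obtain i j k where r: "Rtrip x i j k" "x ! j < v" by blast
        have "last x \<le> x ! j" using B1[OF r(1)] .
        moreover have "1 \<le> x ! j" using r(1) unfolding Rtrip_def by linarith
        ultimately show False using vb r(2) by linarith
      qed
      ultimately show ?thesis by blast
    qed
  qed
qed


lemma B_step:
  assumes x: "x \<in> Cls PB n" and I: "InvB x" and v: "v \<in> EB x"
  shows "InvB (x @ [v])"
proof -
  let ?M = "mx x"
  let ?y = "x @ [v]"
  let ?l = "last x"
  have xne: "x \<noteq> []" and x0: "x ! 0 = 0"
    and B1: "\<And>i j k. Rtrip x i j k \<Longrightarrow> last x \<le> x ! j"
    and B3: "\<And>u. u \<le> mx x \<Longrightarrow> \<exists>i<length x. x ! i = u"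
    and B4: "stB x \<Longrightarrow> (\<forall>i j k. \<not> Rtrip x i j k) \<and> last x = mx x \<and> asc x \<le> mx x"
    using I unfolding InvB_def by blast+
  have lM: "?l \<le> ?M" using last_le_mx[OF xne] .
  have vb: "v \<le> ?M + 1" using v lM unfolding EB_def by (auto split: if_splits)
  have vns: "\<not> stB x \<Longrightarrow> v \<le> max 1 ?l" using v unfolding EB_def by simp
  have M': "mx ?y = max ?M v" using mx_snoc[OF xne] .
  have y0: "?y ! 0 = 0" using xne x0 by (simp add: nth_append)
  have ly: "last ?y = v" by simp
  have Rold: "Rtrip x i j k" if r: "Rtrip ?y i j k" "k < length x" for i j k
    using r unfolding Rtrip_def by (auto simp: nth_append)
  have Rnew: "?y ! k = v" "j < length x" "?y ! j = x ! j" "?y ! i = x ! i"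
    if r: "Rtrip ?y i j k" "\<not> k < length x" for i j k
    using r unfolding Rtrip_def by (auto simp: nth_append)
  have N1: "v \<le> ?y ! j" if r: "Rtrip ?y i j k" for i j k
  proof (cases "k < length x")
    case True
    have rx: "Rtrip x i j k" using Rold[OF r True] .
    then have "\<not> stB x" using B4 by blast
    then have "v \<le> max 1 ?l" using vns by blast
    moreover have "?l \<le> x ! j" using B1[OF rx] .
    moreover have "1 \<le> x ! j" using rx unfolding Rtrip_def by linarith
    moreover have "?y ! j = x ! j" using rx unfolding Rtrip_def by (simp add: nth_append)
    ultimately show ?thesis by linarith
  next
    case False
    have "?y ! k = ?y ! i \<or> ?y ! k = ?y ! j" "?y ! i < ?y ! j" using r unfolding Rtrip_def by auto
    then show ?thesis using Rnew[OF r False] by auto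
  qed
  have N3: "\<exists>i<length ?y. ?y ! i = u" if u: "u \<le> mx ?y" for u
  proof (cases "u \<le> ?M")
    case True
    then obtain i where "i < length x" "x ! i = u" using B3 by blast
    then show ?thesis by (intro exI[of _ i]) (simp add: nth_append)
  next
    case False
    then have "u = v" using u M' vb by (simp add: max_def split: if_splits)
    then show ?thesis by (intro exI[of _ "length x"]) simp
  qed
  have N4: "(\<forall>i j k. \<not> Rtrip ?y i j k) \<and> last ?y = mx ?y \<and> asc ?y \<le> mx ?y" if s: "stB ?y"
  proof -
    have sx: "stB x" and vv: "v = Suc ?l \<or> (v = 0 \<and> ?l = 0)" using s stB_snoc[OF xne] by auto
    have B4x: "(\<forall>i j k. \<not> Rtrip x i j k)" "?l = ?M" "asc x \<le> ?M" using B4[OF sx] by auto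
    have nr: "\<not> Rtrip ?y i j k" for i j k
    proof
      assume r: "Rtrip ?y i j k"
      show False
      proof (cases "k < length x")
        case True
        then show False using Rold[OF r True] B4x by blast
      next
        case False
        have e: "?y ! k = v" "j < length x" "?y ! j = x ! j" "?y ! i = x ! i" using Rnew[OF r False] by auto
        have "x ! j \<le> ?M" using mx_ge[OF e(2)] .
        moreover have "?y ! k = ?y ! i \<or> ?y ! k = ?y ! j" "?y ! i < ?y ! j" using r unfolding Rtrip_def by auto
        ultimately show False using e vv B4x by auto
      qed
    qed
    have "last ?y = mx ?y" using vv B4x M' by auto
    moreover have "asc ?y \<le> mx ?y"
      using vv B4x M' asc_snoc[OF xne, of v] by auto
    ultimately show ?thesis using nr by blast
  qed
  have N2: "\<exists>i j k. Rtrip ?y i j k \<and> ?y ! j \<le> max 1 (last ?y)" if ns: "\<not> stB ?y"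
  proof (cases "v = 0")
    case False
    have "v \<le> ?M"
    proof (rule ccontr)
      assume "\<not> v \<le> ?M"
      then have vM: "v = ?M + 1" using vb by simp
      show False
      proof (cases "stB x")
        case True
        then have "?l = ?M" using B4 by blast
        then have "stB ?y" using True vM stB_snoc[OF xne] by simp
        then show False using ns by blast
      next
        case f: False
        then have "v \<le> max 1 ?l" using vns by blast
        then have "?M = 0" using vM lM by linarith
        then show False using mx0_stB f by blast
      qed
    qed
    then obtain j where j: "j < length x" "x ! j = v" using B3 by blast
    have "0 < j" using j x0 False by (cases j) auto
    have "Rtrip ?y 0 j (length x)" unfolding Rtrip_def using j \<open>0 < j\<close> False x0 xne
      by (simp add: nth_append)
    moreover have "?y ! j \<le> max 1 (last ?y)" using j by (simp add: nth_append)
    ultimately show ?thesis by blast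
  next
    case True
    have "?M \<noteq> 0"
    proof
      assume "?M = 0"
      then have "stB x" "?l = 0" using mx0_stB lM by auto
      then have "stB ?y" using True stB_snoc[OF xne] by simp
      then show False using ns by blast
    qed
    then obtain j where j: "j < length x" "x ! j = 1" using B3[of 1] by auto
    have "0 < j" using j x0 by (cases j) auto
    have "Rtrip ?y 0 j (length x)" unfolding Rtrip_def using j \<open>0 < j\<close> True x0 xne
      by (simp add: nth_append)
    moreover have "?y ! j \<le> max 1 (last ?y)" using j by (simp add: nth_append)
    ultimately show ?thesis by blast
  qed
  show ?thesis unfolding InvB_def using y0 N1 N2 N3 N4 ly by (metis snoc_eq_iff_butlast)
qed


interpretation B: cls PB EB InvB
proof
  show "\<forall>p\<in>PB. length p = 4" by simp
  have "asc [0] = 0" by (simp add: asc_def)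
  moreover have "\<not> Rtrip [0] i j k" for i j k unfolding Rtrip_def by simp
  moreover have "stB [0]" by (simp add: stB_def)
  ultimately show "InvB [0]" unfolding InvB_def by (simp add: mx_single)
next
  fix x n v assume "1 \<le> n" "x \<in> Cls PB n" "InvB x"
  then show "(v \<le> 1 + asc x \<and> (\<forall>p\<in>PB. \<not> occ3 x (\<lambda>a b c. red [a,b,c,v] = p))) \<longleftrightarrow> v \<in> EB x"
    using B_ext by blast
next
  fix x n v assume "1 \<le> n" "x \<in> Cls PB n" "InvB x" "v \<in> EB x"
  then show "InvB (x @ [v])" using B_step by blast
next
  fix x n assume "1 \<le> n" "x \<in> Cls PB n" "InvB x"
  then show "finite (EB x)" unfolding EB_def by simp
qed

lemma card_eq_single: "finite A \<Longrightarrow> card {v \<in> A. v = j} = (if j \<in> A then 1 else 0)"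
proof -
  have "{v \<in> A. v = j} = (if j \<in> A then {j} else {})" by auto
  then show "card {v \<in> A. v = j} = (if j \<in> A then 1 else 0)" by simp
qed

lemma B_last_bound: "x \<in> Cls P n \<Longrightarrow> 1 \<le> n \<Longrightarrow> last x \<le> n - 1"
proof -
  assume x: "x \<in> Cls P n" and n: "1 \<le> n"
  have xne: "x \<noteq> []" using Cls_ne[OF x n] .
  have "last x \<le> mx x" using last_le_mx[OF xne] .
  also have "\<dots> \<le> asc x" using mx_le_asc[OF x] .
  also have "\<dots> \<le> length x - 1" by (rule asc_le)
  finally show ?thesis using Cls_len[OF x] by simp
qed

lemma B_U:
  assumes n: "1 \<le> n"
  shows "card {y \<in> Cls PB (Suc n). last y = j} = card {x \<in> Cls PB n. j \<in> EB x}"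
proof -
  have "card {y \<in> Cls PB (Suc n). last y = j} = (\<Sum>x\<in>Cls PB n. card {v \<in> EB x. last (x @ [v]) = j})"
    by (rule B.count_step[OF n])
  also have "\<dots> = (\<Sum>x\<in>Cls PB n. if j \<in> EB x then 1 else 0)"
  proof (intro sum.cong refl)
    fix x assume "x \<in> Cls PB n"
    have "finite (EB x)" unfolding EB_def by simp
    then show "card {v \<in> EB x. last (x @ [v]) = j} = (if j \<in> EB x then 1 else 0)"
      using card_eq_single[of "EB x" j] by simp
  qed
  also have "\<dots> = card {x \<in> Cls PB n. j \<in> EB x}" by (rule sum_if_card[OF finite_Cls])
  finally show ?thesis .
qed

lemma B_01: "x \<in> Cls PB n \<Longrightarrow> j \<le> 1 \<Longrightarrow> j \<in> EB x"
  unfolding EB_def by auto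

lemma B_j2:
  assumes n: "1 \<le> n" and x: "x \<in> Cls PB n" and j: "2 \<le> j"
  shows "j \<in> EB x \<longleftrightarrow> j \<le> last x \<or> (stB x \<and> Suc (last x) = j)"
proof -
  have I: "InvB x" using B.inv_all[OF n x] .
  show ?thesis
  proof (cases "stB x")
    case True
    then have "last x = mx x" using I unfolding InvB_def by blast
    then show ?thesis using True unfolding EB_def by auto
  next
    case False
    then show ?thesis using j unfolding EB_def by auto
  qed
qed

lemma B_S:
  assumes n: "1 \<le> n"
  shows "card {x \<in> Cls PB n. stB x \<and> last x = m} = (if m < n then 1 else 0)"
  using n
proof (induction n arbitrary: m rule: nat_induct_at_least)
  case base
  have c: "Cls PB 1 = {[0]}" by (rule Cls_1) simp
  have "stB [0]" by (simp add: stB_def)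
  then have "{x \<in> Cls PB 1. stB x \<and> last x = m} = (if m = 0 then {[0]} else {})"
    unfolding c by auto
  then show ?case by simp
next
  case (Suc n)
  have "card {y \<in> Cls PB (Suc n). stB y \<and> last y = m} =
     (\<Sum>x\<in>Cls PB n. card {v \<in> EB x. stB (x @ [v]) \<and> last (x @ [v]) = m})"
    by (rule B.count_step[OF Suc.hyps])
  also have "\<dots> = (\<Sum>x\<in>Cls PB n. if stB x \<and> (m = Suc (last x) \<or> (m = 0 \<and> last x = 0)) then 1 else 0)"
  proof (intro sum.cong refl)
    fix x assume x: "x \<in> Cls PB n"
    have xne: "x \<noteq> []" using Cls_ne[OF x Suc.hyps] .
    have I: "InvB x" using B.inv_all[OF Suc.hyps x] .
    have e: "stB (x @ [v]) \<and> last (x @ [v]) = m \<longleftrightarrow> v = m \<and> stB x \<and> (m = Suc (last x) \<or> (m = 0 \<and> last x = 0))" for v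
      using stB_snoc[OF xne, of v] by auto
    have "{v \<in> EB x. stB (x @ [v]) \<and> last (x @ [v]) = m} = {v \<in> EB x. v = m \<and> stB x \<and> (m = Suc (last x) \<or> (m = 0 \<and> last x = 0))}"
      using e by simp
    also have "\<dots> = (if stB x \<and> (m = Suc (last x) \<or> (m = 0 \<and> last x = 0)) then {m} else {})"
    proof (cases "stB x \<and> (m = Suc (last x) \<or> (m = 0 \<and> last x = 0))")
      case True
      then have "last x = mx x" using I unfolding InvB_def by blast
      then have "m \<in> EB x" using True unfolding EB_def by auto
      then show ?thesis using True by auto
    next
      case False
      then show ?thesis by auto
    qed
    finally show "card {v \<in> EB x. stB (x @ [v]) \<and> last (x @ [v]) = m} =
       (if stB x \<and> (m = Suc (last x) \<or> (m = 0 \<and> last x = 0)) then 1 else 0)" by simp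
  qed
  also have "\<dots> = card {x \<in> Cls PB n. stB x \<and> (m = Suc (last x) \<or> (m = 0 \<and> last x = 0))}"
    by (rule sum_if_card[OF finite_Cls])
  also have "\<dots> = (if m < Suc n then 1 else 0)"
  proof (cases m)
    case 0
    then have "{x \<in> Cls PB n. stB x \<and> (m = Suc (last x) \<or> (m = 0 \<and> last x = 0))} = {x \<in> Cls PB n. stB x \<and> last x = 0}"
      by auto
    then show ?thesis using Suc.IH[of 0] 0 Suc.hyps by simp
  next
    case (Suc m')
    then have "{x \<in> Cls PB n. stB x \<and> (m = Suc (last x) \<or> (m = 0 \<and> last x = 0))} = {x \<in> Cls PB n. stB x \<and> last x = m'}"
      by auto
    then show ?thesis using Suc.IH[of m'] Suc by simp
  qed
  finally show ?case .
qed


lemma split_ge: "{x \<in> A. j \<le> (f x::nat)} = {x \<in> A. f x = j} \<union> {x \<in> A. Suc j \<le> f x}"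
  by auto

lemma card_split_ge:
  assumes "finite A"
  shows "card {x \<in> A. j \<le> (f x::nat)} = card {x \<in> A. f x = j} + card {x \<in> A. Suc j \<le> f x}"
proof -
  have "card ({x \<in> A. f x = j} \<union> {x \<in> A. Suc j \<le> f x}) = card {x \<in> A. f x = j} + card {x \<in> A. Suc j \<le> f x}"
    by (rule card_Un_disjoint) (use assms in auto)
  then show ?thesis using split_ge[of A j f] by simp
qed

lemma B_Ustep:
  assumes n: "1 \<le> n" and j: "2 \<le> j"
  shows "card {y \<in> Cls PB (Suc n). last y = j} =
    card {x \<in> Cls PB n. j \<le> last x} + card {x \<in> Cls PB n. stB x \<and> last x = j - 1}"
proof -
  have "card {y \<in> Cls PB (Suc n). last y = j} = card {x \<in> Cls PB n. j \<in> EB x}"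
    by (rule B_U[OF n])
  also have "{x \<in> Cls PB n. j \<in> EB x} = {x \<in> Cls PB n. j \<le> last x} \<union> {x \<in> Cls PB n. stB x \<and> last x = j - 1}"
    using B_j2[OF n _ j] j by auto
  also have "card \<dots> = card {x \<in> Cls PB n. j \<le> last x} + card {x \<in> Cls PB n. stB x \<and> last x = j - 1}"
    by (rule card_Un_disjoint) (use finite_Cls j in auto)
  finally show ?thesis .
qed

lemma B_W:
  assumes n: "1 \<le> n"
  shows "2 \<le> j \<Longrightarrow> card {x \<in> Cls PB n. j \<le> last x} = 2 ^ (n - j) - 1"
  using n
proof (induction n arbitrary: j rule: nat_induct_at_least)
  case base
  have c: "Cls PB 1 = {[0]}" by (rule Cls_1) simp
  have e: "{x \<in> Cls PB 1. j \<le> last x} = {}" unfolding c using base by auto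
  have "card {x \<in> Cls PB 1. j \<le> last x} = 0" by (simp only: e card.empty)
  moreover have "(2::nat) ^ (1 - j) - 1 = 0" using base by simp
  ultimately show ?case by (simp only:)
next
  case (Suc n)
  have zero: "card {x \<in> Cls PB (Suc n). k \<le> last x} = 0" if k: "Suc n \<le> k" for k
  proof -
    have e: "{x \<in> Cls PB (Suc n). k \<le> last x} = {}"
      using B_last_bound[of _ PB "Suc n"] k by fastforce
    show ?thesis by (metis e card.empty)
  qed
  show ?case
  proof (cases "Suc n \<le> j")
    case True
    then show ?thesis using zero[OF True] by simp
  next
    case False
    then have jn: "j \<le> Suc n" by simp
    show ?thesis
    using jn
    proof (induction j rule: inc_induct)
      case base
      then show ?case using zero by simp
    next
      case (step k)
      have k2: "2 \<le> k" using step.hyps Suc.prems by simp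
      have "card {x \<in> Cls PB (Suc n). k \<le> last x} =
         card {x \<in> Cls PB (Suc n). last x = k} + card {x \<in> Cls PB (Suc n). Suc k \<le> last x}"
        by (rule card_split_ge[OF finite_Cls])
      also have "card {x \<in> Cls PB (Suc n). last x = k} =
         card {x \<in> Cls PB n. k \<le> last x} + card {x \<in> Cls PB n. stB x \<and> last x = k - 1}"
        by (rule B_Ustep[OF Suc.hyps k2])
      also have "card {x \<in> Cls PB n. k \<le> last x} = 2 ^ (n - k) - 1" using Suc.IH[OF k2] .
      also have "card {x \<in> Cls PB n. stB x \<and> last x = k - 1} = 1"
        using B_S[OF Suc.hyps, of "k - 1"] step.hyps k2 by simp
      also have "card {x \<in> Cls PB (Suc n). Suc k \<le> last x} = 2 ^ (Suc n - Suc k) - 1"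
        using step.IH by simp
      finally have "card {x \<in> Cls PB (Suc n). k \<le> last x} = (2 ^ (n - k) - 1 + 1) + (2 ^ (n - k) - 1)"
        by simp
      also have "\<dots> = 2 ^ (Suc n - k) - 1"
      proof -
        have kn: "k \<le> n" using step.hyps by simp
        have p: "(1::nat) \<le> 2 ^ (n - k)" by simp
        have "Suc n - k = Suc (n - k)" using kn by simp
        then show ?thesis using p by simp
      qed
      finally show ?case .
    qed
  qed
qed

lemma B_total:
  assumes n: "1 \<le> n"
  shows "card (Cls PB (Suc n)) + 1 = 2 * card (Cls PB n) + 2 ^ (n - 1)"
proof -
  let ?S = "Cls PB (Suc n)"
  have "card ?S = card {x \<in> ?S. 0 \<le> last x}" by simp
  also have "\<dots> = card {x \<in> ?S. last x = 0} + card {x \<in> ?S. 1 \<le> last x}"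
    using card_split_ge[OF finite_Cls[of PB "Suc n"], where j=0 and f=last] by simp
  also have "card {x \<in> ?S. 1 \<le> last x} = card {x \<in> ?S. last x = 1} + card {x \<in> ?S. 2 \<le> last x}"
    using card_split_ge[OF finite_Cls[of PB "Suc n"], where j=1 and f=last] by (simp add: numeral_2_eq_2)
  also have "card {x \<in> ?S. last x = 0} = card (Cls PB n)"
  proof -
    have "{x \<in> Cls PB n. 0 \<in> EB x} = Cls PB n" using B_01[of _ n 0] by blast
    then show ?thesis using B_U[OF n, of 0] by simp
  qed
  also have "card {x \<in> ?S. last x = 1} = card (Cls PB n)"
  proof -
    have "{x \<in> Cls PB n. 1 \<in> EB x} = Cls PB n" using B_01[of _ n 1] by blast
    then show ?thesis using B_U[OF n, of 1] by simp
  qed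
  also have "card {x \<in> ?S. 2 \<le> last x} = 2 ^ (Suc n - 2) - 1"
    using B_W[of "Suc n" 2] by simp
  finally have "card ?S = card (Cls PB n) + (card (Cls PB n) + (2 ^ (n - 1) - 1))" by simp
  moreover have "(1::nat) \<le> 2 ^ (n - 1)" by simp
  ultimately show ?thesis by simp
qed

lemma B_formula:
  assumes "1 \<le> n"
  shows "int (card (Cls PB n)) = (int n - 1) * 2 ^ (n - 2) + 1"
proof -
  have c1: "Cls PB 1 = {[0]}" by (rule Cls_1) simp
  have a1: "card (Cls PB 1) = 1" using c1 by simp
  show ?thesis using recur_formula[of "\<lambda>n. card (Cls PB n)", OF a1 B_total assms] by simp
qed

definition lz :: "nat list \<Rightarrow> nat" where
  "lz x = Max {i. i < length x \<and> x ! i = 0}"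

lemma lz_props:
  assumes "x \<noteq> []" "x ! 0 = 0"
  shows "lz x < length x" "x ! lz x = 0" "\<And>i. lz x < i \<Longrightarrow> i < length x \<Longrightarrow> x ! i \<noteq> 0"
proof -
  let ?Z = "{i. i < length x \<and> x ! i = 0}"
  have fin: "finite ?Z" by (rule finite_subset[of _ "{..<length x}"]) auto
  have ne: "0 \<in> ?Z" using assms by auto
  have "lz x \<in> ?Z" unfolding lz_def using fin ne by (intro Max_in) auto
  then show "lz x < length x" "x ! lz x = 0" by auto
  fix i assume i: "lz x < i" "i < length x"
  show "x ! i \<noteq> 0"
  proof
    assume "x ! i = 0"
    then have "i \<in> ?Z" using i by simp
    then have "i \<le> lz x" unfolding lz_def using Max_ge[OF fin] by blast
    then show False using i by simp
  qed
qed

lemma lz_snoc0: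
  assumes "x \<noteq> []" "x ! 0 = 0"
  shows "lz (x @ [0]) = length x"
proof -
  have "(x @ [0]) \<noteq> []" "(x @ [0]) ! 0 = 0" using assms by (auto simp: nth_append)
  note p = lz_props[OF this]
  have "(x @ [0]) ! length x = 0" by simp
  then have "\<not> lz (x @ [0]) < length x" using p(3)[of "length x"] by auto
  then show ?thesis using p(1) by simp
qed

lemma lz_snoc:
  assumes "x \<noteq> []" "x ! 0 = 0" "v \<noteq> 0"
  shows "lz (x @ [v]) = lz x"
proof -
  have "{i. i < length (x @ [v]) \<and> (x @ [v]) ! i = 0} = {i. i < length x \<and> x ! i = 0}"
    using assms by (auto simp: nth_append less_Suc_eq)
  then show ?thesis unfolding lz_def by simp
qed

definition sA :: "nat list \<Rightarrow> nat" where
  "sA x = (if lz x = length x - 1 then mx x + 1 else x ! (lz x + 1))"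

definition tA :: "nat list \<Rightarrow> nat" where
  "tA x = (if rf x then mx x + 1 else last x)"

definition EA :: "nat list \<Rightarrow> nat set" where
  "EA x = {0} \<union> {sA x..tA x}"

definition labA :: "nat list \<Rightarrow> nat" where
  "labA x = tA x + 1 - sA x"

abbreviation PA :: "nat list set" where "PA \<equiv> {[0,1,0,1], [0,1,1,2]}"

definition InvA :: "nat list \<Rightarrow> bool" where
  "InvA x \<longleftrightarrow> x \<noteq> [] \<and> x ! 0 = 0 \<and>
    (\<forall>u. 1 \<le> u \<and> u < sA x \<longrightarrow> (\<exists>j<lz x. x ! j = u)) \<and>
    (\<not> rf x \<and> last x \<noteq> 0 \<longrightarrow> (\<exists>j<length x - 1. x ! j = last x)) \<and>
    (\<forall>i\<le>lz x. x ! i < sA x) \<and>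
    (\<forall>j k. j < k \<and> k < length x \<and> x ! j = x ! k \<and> 0 < x ! j \<longrightarrow> last x \<le> x ! j) \<and>
    (\<forall>j k. lz x < j \<and> j < k \<and> k < length x \<and> x ! k < x ! j \<longrightarrow> last x \<le> x ! k) \<and>
    (rf x \<longrightarrow> asc x \<le> mx x) \<and>
    (\<forall>u\<le>mx x. \<exists>i<length x. x ! i = u) \<and>
    (rf x \<longrightarrow> (\<forall>j k. lz x < j \<and> j < k \<and> k < length x \<longrightarrow> x ! j < x ! k)) \<and>
    (\<forall>i. lz x < i \<and> i < length x \<longrightarrow> sA x \<le> x ! i)"

lemma sA_pos:
  assumes "x \<noteq> []" "x ! 0 = 0"
  shows "1 \<le> sA x"
proof (cases "lz x = length x - 1")
  case True then show ?thesis unfolding sA_def by simp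
next
  case False
  then have "lz x + 1 < length x" using lz_props(1)[OF assms] by linarith
  then have "x ! (lz x + 1) \<noteq> 0" using lz_props(3)[OF assms] by simp
  then show ?thesis using False unfolding sA_def by simp
qed

lemma sA_le: "x \<noteq> [] \<Longrightarrow> x ! 0 = 0 \<Longrightarrow> sA x \<le> mx x + 1"
proof -
  assume a: "x \<noteq> []" "x ! 0 = 0"
  show ?thesis
  proof (cases "lz x = length x - 1")
    case True then show ?thesis unfolding sA_def by simp
  next
    case False
    then have "lz x + 1 < length x" using lz_props(1)[OF a] by linarith
    then have "x ! (lz x + 1) \<le> mx x" by (rule mx_ge)
    then show ?thesis using False unfolding sA_def by simp
  qed
qed

lemma tA_le: "x \<noteq> [] \<Longrightarrow> tA x \<le> mx x + 1"
  unfolding tA_def using last_le_mx[of x] by auto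

lemma PA_simp: "(\<forall>p\<in>PA. \<not> occ3 x (\<lambda>a b c. red [a,b,c,v] = p)) \<longleftrightarrow>
   \<not> occ3 x (\<lambda>a b c. a < b \<and> c = a \<and> v = b) \<and> \<not> occ3 x (\<lambda>a b c. a < b \<and> c = b \<and> b < v)"
  by (simp only: ball_simps p0101 p0112 simp_thms)

lemma A_ext:
  assumes x: "x \<in> Cls PA n" and I: "InvA x"
  shows "(v \<le> 1 + asc x \<and> (\<forall>p\<in>PA. \<not> occ3 x (\<lambda>a b c. red [a,b,c,v] = p))) \<longleftrightarrow> v \<in> EA x"
proof -
  let ?M = "mx x" and ?z = "lz x" and ?s = "sA x" and ?t = "tA x" and ?l = "last x" and ?n = "length x"
  have xne: "x \<noteq> []" and x0: "x ! 0 = 0"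
    and A2: "\<And>u. 1 \<le> u \<Longrightarrow> u < ?s \<Longrightarrow> (\<exists>j<?z. x ! j = u)"
    and A3: "\<not> rf x \<Longrightarrow> ?l \<noteq> 0 \<Longrightarrow> (\<exists>j<?n - 1. x ! j = ?l)"
    and A5: "\<And>i. i \<le> ?z \<Longrightarrow> x ! i < ?s"
    and A6: "\<And>j k. j < k \<Longrightarrow> k < ?n \<Longrightarrow> x ! j = x ! k \<Longrightarrow> 0 < x ! j \<Longrightarrow> ?l \<le> x ! j"
    and A7: "\<And>j k. ?z < j \<Longrightarrow> j < k \<Longrightarrow> k < ?n \<Longrightarrow> x ! k < x ! j \<Longrightarrow> ?l \<le> x ! k"
    and A8: "rf x \<Longrightarrow> asc x \<le> ?M"
    and A11: "\<And>j k. rf x \<Longrightarrow> ?z < j \<Longrightarrow> j < k \<Longrightarrow> k < ?n \<Longrightarrow> x ! j < x ! k"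
    using I unfolding InvA_def by blast+
  have zp: "?z < ?n" "x ! ?z = 0" using lz_props[OF xne x0] by auto
  have s1: "1 \<le> ?s" using sA_pos[OF xne x0] .
  have Mle: "?M \<le> asc x" using mx_le_asc[OF x] .
  have tle: "?t \<le> ?M + 1" using tA_le[OF xne] .
  have lM: "?l \<le> ?M" using last_le_mx[OF xne] .
  have lastn: "x ! (?n - 1) = ?l" using xne by (simp add: last_conv_nth)
  show ?thesis unfolding PA_simp
  proof
    assume h: "v \<le> 1 + asc x \<and> \<not> occ3 x (\<lambda>a b c. a < b \<and> c = a \<and> v = b) \<and> \<not> occ3 x (\<lambda>a b c. a < b \<and> c = b \<and> b < v)"
    show "v \<in> EA x"
    proof (cases "v = 0")
      case True then show ?thesis unfolding EA_def by simp
    next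
      case v0: False
      have sv: "?s \<le> v"
      proof (rule ccontr)
        assume "\<not> ?s \<le> v"
        then obtain j where j: "j < ?z" "x ! j = v" using A2[of v] v0 by auto
        have "0 < j" using j x0 v0 by (cases j) auto
        have "occ3 x (\<lambda>a b c. a < b \<and> c = a \<and> v = b)"
          by (rule occ3I[of 0 j ?z]) (use j zp x0 v0 \<open>0 < j\<close> in auto)
        then show False using h by blast
      qed
      have vt: "v \<le> ?t"
      proof (rule ccontr)
        assume nvt: "\<not> v \<le> ?t"
        show False
        proof (cases "rf x")
          case True
          then show False using nvt h A8 unfolding tA_def by simp
        next
          case nrf: False
          show False
          proof (cases "?l = 0")
            case False
            obtain j where j: "j < ?n - 1" "x ! j = ?l" using A3[OF nrf False] by blast
            have "0 < j" using j x0 False by (cases j) auto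
            have "occ3 x (\<lambda>a b c. a < b \<and> c = b \<and> b < v)"
              by (rule occ3I[of 0 j "?n - 1"]) (use j x0 False \<open>0 < j\<close> lastn nvt nrf xne in \<open>auto simp: tA_def\<close>)
            then show False using h by blast
          next
            case True
            then have "?z = ?n - 1" using lz_props(3)[OF xne x0, of "?n - 1"] lastn zp by fastforce
            then have sM: "?s = ?M + 1" unfolding sA_def by simp
            obtain j k where jk: "j < k" "k < ?n" "x ! j = x ! k" "x ! j \<noteq> 0" using nrf unfolding rf_def by blast
            have "0 < j" using jk x0 by (cases j) auto
            have "x ! j \<le> ?M" using mx_ge jk by (meson less_trans)
            have "occ3 x (\<lambda>a b c. a < b \<and> c = b \<and> b < v)"
              by (rule occ3I[of 0 j k]) (use jk x0 \<open>0 < j\<close> \<open>x ! j \<le> ?M\<close> sM sv in auto)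
            then show False using h by blast
          qed
        qed
      qed
      show ?thesis using sv vt unfolding EA_def by simp
    qed
  next
    assume v: "v \<in> EA x"
    have vcase: "v = 0 \<or> (?s \<le> v \<and> v \<le> ?t)" using v unfolding EA_def by auto
    have "v \<le> 1 + asc x" using vcase tle Mle by auto
    moreover have "\<not> occ3 x (\<lambda>a b c. a < b \<and> c = a \<and> v = b)"
    proof
      assume "occ3 x (\<lambda>a b c. a < b \<and> c = a \<and> v = b)"
      then obtain i j k where ijk: "i < j" "j < k" "k < ?n" "x ! i < x ! j" "x ! k = x ! i" "v = x ! j"
        unfolding occ3_def by blast
      have v0: "v \<noteq> 0" using ijk by simp
      then have vst: "?s \<le> v" "v \<le> ?t" using vcase by auto
      have jz: "?z < j"
      proof (rule ccontr)
        assume "\<not> ?z < j"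
        then have "x ! j < ?s" using A5 by simp
        then show False using vst ijk by simp
      qed
      have "?l \<le> x ! k" using A7[OF jz ijk(2) ijk(3)] ijk by simp
      then have "?l < v" using ijk by simp
      show False
      proof (cases "rf x")
        case True
        have "x ! j < x ! k" using A11[OF True jz ijk(2) ijk(3)] .
        then show False using ijk by simp
      next
        case False
        then show False using vst \<open>?l < v\<close> unfolding tA_def by simp
      qed
    qed
    moreover have "\<not> occ3 x (\<lambda>a b c. a < b \<and> c = b \<and> b < v)"
    proof
      assume "occ3 x (\<lambda>a b c. a < b \<and> c = b \<and> b < v)"
      then obtain i j k where ijk: "i < j" "j < k" "k < ?n" "x ! i < x ! j" "x ! k = x ! j" "x ! j < v"
        unfolding occ3_def by blast
      have vst: "?s \<le> v" "v \<le> ?t" using vcase ijk by auto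
      show False
      proof (cases "rf x")
        case True
        then have "x ! j = 0" using ijk unfolding rf_def by (metis less_trans)
        then show False using ijk by simp
      next
        case False
        have "?l \<le> x ! j" using A6[of j k] ijk by simp
        then show False using vst ijk False unfolding tA_def by simp
      qed
    qed
    ultimately show "v \<le> 1 + asc x \<and> \<not> occ3 x (\<lambda>a b c. a < b \<and> c = a \<and> v = b) \<and> \<not> occ3 x (\<lambda>a b c. a < b \<and> c = b \<and> b < v)"
      by blast
  qed
qed


lemma sA_snoc0:
  assumes "x \<noteq> []" "x ! 0 = 0"
  shows "sA (x @ [0]) = mx x + 1"
  using lz_snoc0[OF assms] mx_snoc[OF assms(1), of 0] unfolding sA_def by simp

lemma sA_snoc:
  assumes xne: "x \<noteq> []" and x0: "x ! 0 = 0" and v0: "v \<noteq> 0" and v: "v \<in> EA x"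
  shows "sA (x @ [v]) = sA x"
proof -
  have z': "lz (x @ [v]) = lz x" using lz_snoc[OF xne x0 v0] .
  have zp: "lz x < length x" using lz_props[OF xne x0] by auto
  have vst: "sA x \<le> v" "v \<le> tA x" using v v0 unfolding EA_def by auto
  show ?thesis
  proof (cases "lz x = length x - 1")
    case True
    then have sM: "sA x = mx x + 1" unfolding sA_def by simp
    then have "v = mx x + 1" using vst tA_le[OF xne] by simp
    moreover have "lz (x @ [v]) \<noteq> length (x @ [v]) - 1" using z' zp by simp
    ultimately show ?thesis using z' True sM xne unfolding sA_def[of "x @ [v]"]
      by (simp add: nth_append)
  next
    case False
    then have "lz x + 1 < length x" using zp by linarith
    then show ?thesis using z' False unfolding sA_def by (simp add: nth_append)
  qed
qed

lemma A_step:
  assumes x: "x \<in> Cls PA n" and I: "InvA x" and v: "v \<in> EA x"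
  shows "InvA (x @ [v])"
proof -
  let ?M = "mx x" and ?z = "lz x" and ?s = "sA x" and ?t = "tA x" and ?l = "last x" and ?n = "length x"
  let ?y = "x @ [v]"
  have xne: "x \<noteq> []" and x0: "x ! 0 = 0"
    and A2: "\<And>u. 1 \<le> u \<Longrightarrow> u < ?s \<Longrightarrow> (\<exists>j<?z. x ! j = u)"
    and A3: "\<not> rf x \<Longrightarrow> ?l \<noteq> 0 \<Longrightarrow> (\<exists>j<?n - 1. x ! j = ?l)"
    and A5: "\<And>i. i \<le> ?z \<Longrightarrow> x ! i < ?s"
    and A6: "\<And>j k. j < k \<Longrightarrow> k < ?n \<Longrightarrow> x ! j = x ! k \<Longrightarrow> 0 < x ! j \<Longrightarrow> ?l \<le> x ! j"
    and A7: "\<And>j k. ?z < j \<Longrightarrow> j < k \<Longrightarrow> k < ?n \<Longrightarrow> x ! k < x ! j \<Longrightarrow> ?l \<le> x ! k"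
    and A8: "rf x \<Longrightarrow> asc x \<le> ?M"
    and A10: "\<And>u. u \<le> ?M \<Longrightarrow> \<exists>i<?n. x ! i = u"
    and A11: "\<And>j k. rf x \<Longrightarrow> ?z < j \<Longrightarrow> j < k \<Longrightarrow> k < ?n \<Longrightarrow> x ! j < x ! k"
    and A13: "\<And>i. ?z < i \<Longrightarrow> i < ?n \<Longrightarrow> ?s \<le> x ! i"
    using I unfolding InvA_def by blast+
  have zp: "?z < ?n" "x ! ?z = 0" using lz_props[OF xne x0] by auto
  have s1: "1 \<le> ?s" using sA_pos[OF xne x0] .
  have tle: "?t \<le> ?M + 1" using tA_le[OF xne] .
  have lM: "?l \<le> ?M" using last_le_mx[OF xne] .
  have M': "mx ?y = max ?M v" using mx_snoc[OF xne] .
  have y0: "?y \<noteq> []" "?y ! 0 = 0" using xne x0 by (auto simp: nth_append)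
  have ny: "length ?y = Suc ?n" by simp
  have yl: "last ?y = v" by simp
  have yx: "\<And>i. i < ?n \<Longrightarrow> ?y ! i = x ! i" by (simp add: nth_append)
  have yn: "?y ! ?n = v" by simp
  show ?thesis
  proof (cases "v = 0")
    case True
    have z': "lz ?y = ?n" using lz_snoc0[OF xne x0] True by simp
    have s': "sA ?y = ?M + 1" using sA_snoc0[OF xne x0] True by simp
    have M'': "mx ?y = ?M" using M' True by simp
    have rf': "rf ?y \<longleftrightarrow> rf x" using rf_snoc[of x v] True by simp
    have N2: "\<forall>u. 1 \<le> u \<and> u < sA ?y \<longrightarrow> (\<exists>j<lz ?y. ?y ! j = u)"
    proof (intro allI impI)
      fix u assume "1 \<le> u \<and> u < sA ?y"
      then have "u \<le> ?M" using s' by simp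
      then obtain i where "i < ?n" "x ! i = u" using A10 by blast
      then show "\<exists>j<lz ?y. ?y ! j = u" using z' yx by metis
    qed
    have N5: "\<forall>i\<le>lz ?y. ?y ! i < sA ?y"
    proof (intro allI impI)
      fix i assume "i \<le> lz ?y"
      then have "i < ?n \<or> i = ?n" using z' by auto
      then show "?y ! i < sA ?y"
      proof
        assume "i < ?n"
        then show ?thesis using yx s' mx_ge[of i x] by simp
      next
        assume "i = ?n"
        then show ?thesis using s' True by simp
      qed
    qed
    have N8: "rf ?y \<longrightarrow> asc ?y \<le> mx ?y"
      using rf' A8 M'' asc_snoc[OF xne, of v] True by simp
    have N10: "\<forall>u\<le>mx ?y. \<exists>i<length ?y. ?y ! i = u"
      using A10 M'' yx ny by (metis less_Suc_eq)
    show ?thesis unfolding InvA_def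
      using y0 N2 N5 N8 N10 yl True z' ny by auto
  next
    case v0: False
    have z': "lz ?y = ?z" using lz_snoc[OF xne x0 v0] .
    have s': "sA ?y = ?s" using sA_snoc[OF xne x0 v0 v] .
    have vst: "?s \<le> v" "v \<le> ?t" using v v0 unfolding EA_def by auto
    have vM: "v \<le> ?M + 1" using vst tle by simp
    have notin: "\<forall>j<?n. x ! j \<noteq> v \<Longrightarrow> v = ?M + 1 \<and> rf x"
    proof -
      assume nj: "\<forall>j<?n. x ! j \<noteq> v"
      have "\<not> v \<le> ?M" using A10 nj by blast
      then have vv: "v = ?M + 1" using vM by simp
      have "rf x" using vv vst lM unfolding tA_def by (cases "rf x") auto
      then show ?thesis using vv by simp
    qed
    have rf': "rf ?y \<longleftrightarrow> rf x \<and> (\<forall>j<?n. x ! j \<noteq> v)" using rf_snoc[of x v] v0 by simp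
    have N2: "\<forall>u. 1 \<le> u \<and> u < sA ?y \<longrightarrow> (\<exists>j<lz ?y. ?y ! j = u)"
    proof (intro allI impI)
      fix u assume "1 \<le> u \<and> u < sA ?y"
      then obtain j where "j < ?z" "x ! j = u" using A2 s' by auto
      then show "\<exists>j<lz ?y. ?y ! j = u" using z' yx zp by (metis less_trans)
    qed
    have N3: "\<not> rf ?y \<and> last ?y \<noteq> 0 \<longrightarrow> (\<exists>j<length ?y - 1. ?y ! j = last ?y)"
    proof
      assume "\<not> rf ?y \<and> last ?y \<noteq> 0"
      then have "\<exists>j<?n. x ! j = v" using rf' notin by auto
      then show "\<exists>j<length ?y - 1. ?y ! j = last ?y" using yx by auto
    qed
    have N5: "\<forall>i\<le>lz ?y. ?y ! i < sA ?y"
      using A5 z' s' yx zp by (metis le_less_trans)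
    have N6: "\<forall>j k. j < k \<and> k < length ?y \<and> ?y ! j = ?y ! k \<and> 0 < ?y ! j \<longrightarrow> last ?y \<le> ?y ! j"
    proof (intro allI impI)
      fix j k assume jk: "j < k \<and> k < length ?y \<and> ?y ! j = ?y ! k \<and> 0 < ?y ! j"
      show "last ?y \<le> ?y ! j"
      proof (cases "k < ?n")
        case True
        have jn: "j < ?n" using jk True by simp
        have e: "x ! j = x ! k" "0 < x ! j" using jk True yx[of j] yx[of k] jn by auto
        have "\<not> rf x"
        proof
          assume "rf x"
          then have "x ! j = 0" using jk True e unfolding rf_def by blast
          then show False using e by simp
        qed
        then have "v \<le> ?l" using vst unfolding tA_def by simp
        moreover have "?l \<le> x ! j" using A6[of j k] jk True e by simp
        moreover have "?y ! j = x ! j" using jk True yx[of j] by simp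
        ultimately show ?thesis by simp
      next
        case False
        then have "k = ?n" using jk by simp
        then show ?thesis using jk by simp
      qed
    qed
    have N7: "\<forall>j k. lz ?y < j \<and> j < k \<and> k < length ?y \<and> ?y ! k < ?y ! j \<longrightarrow> last ?y \<le> ?y ! k"
    proof (intro allI impI)
      fix j k assume jk: "lz ?y < j \<and> j < k \<and> k < length ?y \<and> ?y ! k < ?y ! j"
      show "last ?y \<le> ?y ! k"
      proof (cases "k < ?n")
        case True
        have e: "x ! k < x ! j" "?z < j" using jk True yx z' by auto
        have "\<not> rf x"
        proof
          assume "rf x"
          then have "x ! j < x ! k" using A11 e jk True by blast
          then show False using e by simp
        qed
        then have "v \<le> ?l" using vst unfolding tA_def by simp
        moreover have "?l \<le> x ! k" using A7[of j k] jk True e by simp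
        ultimately show ?thesis using yx True by simp
      next
        case False
        then have "k = ?n" using jk by simp
        then show ?thesis by simp
      qed
    qed
    have N8: "rf ?y \<longrightarrow> asc ?y \<le> mx ?y"
    proof
      assume r: "rf ?y"
      then have "v = ?M + 1" "rf x" using rf' notin by auto
      then show "asc ?y \<le> mx ?y" using A8 M' asc_snoc[OF xne, of v] by simp
    qed
    have N10: "\<forall>u\<le>mx ?y. \<exists>i<length ?y. ?y ! i = u"
    proof (intro allI impI)
      fix u assume u: "u \<le> mx ?y"
      show "\<exists>i<length ?y. ?y ! i = u"
      proof (cases "u \<le> ?M")
        case True
        then obtain i where "i < ?n" "x ! i = u" using A10 by blast
        then show ?thesis using yx by (metis less_Suc_eq ny)
      next
        case False
        then have "u = v" using u M' vM by (simp add: max_def split: if_splits)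
        then show ?thesis using yn ny by (metis lessI)
      qed
    qed
    have N11: "rf ?y \<longrightarrow> (\<forall>j k. lz ?y < j \<and> j < k \<and> k < length ?y \<longrightarrow> ?y ! j < ?y ! k)"
    proof (intro impI allI)
      fix j k assume r: "rf ?y" and jk: "lz ?y < j \<and> j < k \<and> k < length ?y"
      have vv: "v = ?M + 1" "rf x" using r rf' notin by auto
      show "?y ! j < ?y ! k"
      proof (cases "k < ?n")
        case True
        then show ?thesis using A11[OF vv(2)] jk yx z' by simp
      next
        case False
        then have "k = ?n" using jk by simp
        moreover have "j < ?n" using jk False by simp
        ultimately show ?thesis using yx vv mx_ge[of j x] by simp
      qed
    qed
    have N13: "\<forall>i. lz ?y < i \<and> i < length ?y \<longrightarrow> sA ?y \<le> ?y ! i"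
    proof (intro allI impI)
      fix i assume i: "lz ?y < i \<and> i < length ?y"
      show "sA ?y \<le> ?y ! i"
      proof (cases "i < ?n")
        case True
        then show ?thesis using A13 i z' s' yx by simp
      next
        case False
        then have "i = ?n" using i by simp
        then show ?thesis using s' vst by simp
      qed
    qed
    show ?thesis unfolding InvA_def
      using y0 N2 N3 N5 N6 N7 N8 N10 N11 N13 by blast
  qed
qed


lemma lz_single: "lz [0] = 0"
  using lz_props(1)[of "[0]"] by simp

lemma sA_single: "sA [0] = 1"
  unfolding sA_def using lz_single by (simp add: mx_single)

lemma rf_single: "rf [0]" by (simp add: rf_def)

lemma tA_single: "tA [0] = 1"
  unfolding tA_def using rf_single by (simp add: mx_single)

lemma labA_single: "labA [0] = 1"
  unfolding labA_def using sA_single tA_single by simp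

interpretation A: cls PA EA InvA
proof
  show "\<forall>p\<in>PA. length p = 4" by simp
  have "asc [0] = 0" by (simp add: asc_def)
  then show "InvA [0]" unfolding InvA_def using lz_single sA_single rf_single
    by (auto simp: mx_single)
next
  fix x n v assume "1 \<le> n" "x \<in> Cls PA n" "InvA x"
  then show "(v \<le> 1 + asc x \<and> (\<forall>p\<in>PA. \<not> occ3 x (\<lambda>a b c. red [a,b,c,v] = p))) \<longleftrightarrow> v \<in> EA x"
    using A_ext by blast
next
  fix x n v assume "1 \<le> n" "x \<in> Cls PA n" "InvA x" "v \<in> EA x"
  then show "InvA (x @ [v])" using A_step by blast
next
  fix x n assume "1 \<le> n" "x \<in> Cls PA n" "InvA x"
  then show "finite (EA x)" unfolding EA_def by simp
qed

lemma A_basic: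
  assumes "x \<in> Cls PA n" "1 \<le> n"
  shows "InvA x" "x \<noteq> []" "x ! 0 = 0"
  using A.inv_all[OF assms(2,1)] unfolding InvA_def by auto

lemma lab_rf:
  assumes I: "InvA x" and r: "rf x"
  shows "tA x = mx x + 1" "labA x = mx x + 2 - sA x" "1 \<le> labA x"
proof -
  have xne: "x \<noteq> []" "x ! 0 = 0" using I unfolding InvA_def by auto
  show t: "tA x = mx x + 1" using r unfolding tA_def by simp
  show "labA x = mx x + 2 - sA x" using t unfolding labA_def by simp
  then show "1 \<le> labA x" using sA_le[OF xne] by simp
qed

lemma lab_F:
  assumes I: "InvA x" and r: "\<not> rf x" and l: "last x \<noteq> 0"
  shows "sA x \<le> last x" "labA x = last x + 1 - sA x" "1 \<le> labA x" "labA x \<le> last x"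
proof -
  have xne: "x \<noteq> []" "x ! 0 = 0"
    and A13: "\<And>i. lz x < i \<Longrightarrow> i < length x \<Longrightarrow> sA x \<le> x ! i"
    using I unfolding InvA_def by blast+
  have zp: "lz x < length x" "x ! lz x = 0" using lz_props[OF xne] by auto
  have ln: "x ! (length x - 1) = last x" using xne by (simp add: last_conv_nth)
  have "lz x \<noteq> length x - 1" using zp ln l by auto
  then have "lz x < length x - 1" using zp by simp
  then show sl: "sA x \<le> last x" using A13[of "length x - 1"] ln xne by simp
  show lab: "labA x = last x + 1 - sA x" using r unfolding labA_def tA_def by simp
  show "1 \<le> labA x" using lab sl by simp
  show "labA x \<le> last x" using lab sA_pos[OF xne] by simp
qed

lemma lab_D:
  assumes I: "InvA x" and r: "\<not> rf x" and l: "last x = 0"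
  shows "labA x = 0"
proof -
  have xne: "x \<noteq> []" "x ! 0 = 0" using I unfolding InvA_def by auto
  show ?thesis using r l sA_pos[OF xne] unfolding labA_def tA_def by simp
qed

lemma A_child0:
  assumes I: "InvA x"
  shows "rf (x @ [0]) = rf x" "last (x @ [0]) = 0" "rf x \<Longrightarrow> labA (x @ [0]) = 1"
proof -
  have xne: "x \<noteq> []" "x ! 0 = 0" using I unfolding InvA_def by auto
  show r: "rf (x @ [0]) = rf x" using rf_snoc[of x 0] by simp
  show "last (x @ [0]) = 0" by simp
  assume "rf x"
  then show "labA (x @ [0]) = 1" using r sA_snoc0[OF xne] mx_snoc[OF xne(1), of 0]
    unfolding labA_def tA_def by simp
qed

lemma A_child1:
  assumes I: "InvA x" and v: "v \<in> EA x" and v0: "v \<noteq> 0"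
  shows "last (x @ [v]) = v"
    "rf (x @ [v]) \<longleftrightarrow> rf x \<and> v = mx x + 1"
    "labA (x @ [v]) = (if rf x \<and> v = mx x + 1 then labA x + 1 else v + 1 - sA x)"
    "sA x \<le> v" "v \<le> tA x"
proof -
  have xne: "x \<noteq> []" "x ! 0 = 0"
    and A10: "\<And>u. u \<le> mx x \<Longrightarrow> \<exists>i<length x. x ! i = u"
    using I unfolding InvA_def by blast+
  show "last (x @ [v]) = v" by simp
  show vst: "sA x \<le> v" "v \<le> tA x" using v v0 unfolding EA_def by auto
  have vM: "v \<le> mx x + 1" using vst tA_le[OF xne(1)] by simp
  have "(\<forall>j<length x. x ! j \<noteq> v) \<longleftrightarrow> v = mx x + 1"
  proof
    assume "\<forall>j<length x. x ! j \<noteq> v"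
    then have "\<not> v \<le> mx x" using A10 by blast
    then show "v = mx x + 1" using vM by simp
  next
    assume "v = mx x + 1"
    then show "\<forall>j<length x. x ! j \<noteq> v" using mx_ge[of _ x] by fastforce
  qed
  then show rf': "rf (x @ [v]) \<longleftrightarrow> rf x \<and> v = mx x + 1" using rf_snoc[of x v] v0 by simp
  have s': "sA (x @ [v]) = sA x" using sA_snoc[OF xne v0 v] .
  have M': "mx (x @ [v]) = max (mx x) v" using mx_snoc[OF xne(1)] .
  show "labA (x @ [v]) = (if rf x \<and> v = mx x + 1 then labA x + 1 else v + 1 - sA x)"
  proof (cases "rf x \<and> v = mx x + 1")
    case True
    have l1: "labA x = mx x + 2 - sA x" using lab_rf[OF I] True by simp
    have sle: "sA x \<le> mx x + 1" using sA_le[OF xne] .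
    have ry: "rf (x @ [v])" using rf' True by simp
    have "mx (x @ [v]) = mx x + 1" using M' True by simp
    then have "tA (x @ [v]) = mx x + 2" using ry unfolding tA_def by simp
    then have "labA (x @ [v]) = mx x + 3 - sA x" using s' unfolding labA_def by simp
    also have "\<dots> = labA x + 1" using l1 sle by simp
    finally show ?thesis using True by simp
  next
    case False
    have ry: "\<not> rf (x @ [v])" using rf' False by simp
    then have "tA (x @ [v]) = v" unfolding tA_def by simp
    then have "labA (x @ [v]) = v + 1 - sA x" using s' unfolding labA_def by simp
    then show ?thesis by (simp only: if_not_P[OF False])
  qed
qed


lemma card_part: "finite A \<Longrightarrow> card A = card {x \<in> A. P x} + card {x \<in> A. \<not> P x}"
proof -
  assume f: "finite A"
  have "A = {x \<in> A. P x} \<union> {x \<in> A. \<not> P x}" by auto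
  moreover have "card ({x \<in> A. P x} \<union> {x \<in> A. \<not> P x}) = card {x \<in> A. P x} + card {x \<in> A. \<not> P x}"
    by (rule card_Un_disjoint) (use f in auto)
  ultimately show ?thesis by simp
qed

lemma A_M1_in: assumes I: "InvA x" and r: "rf x" shows "mx x + 1 \<in> EA x"
proof -
  have xne: "x \<noteq> []" "x ! 0 = 0" using I unfolding InvA_def by auto
  show ?thesis using sA_le[OF xne] lab_rf(1)[OF I r] unfolding EA_def by simp
qed

lemma A_GTc:
  assumes I: "InvA x"
  shows "card {v \<in> EA x. rf (x @ [v]) \<and> L \<le> labA (x @ [v])} =
    (if rf x \<and> L \<le> 1 then 1 else 0) + (if rf x \<and> L \<le> labA x + 1 then 1 else 0)"
proof (cases "rf x")
  case True
  have eq: "{v \<in> EA x. rf (x @ [v]) \<and> L \<le> labA (x @ [v])} =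
     (if L \<le> 1 then {0} else {}) \<union> (if L \<le> labA x + 1 then {mx x + 1} else {})"
  proof (intro set_eqI iffI)
    fix v assume "v \<in> {v \<in> EA x. rf (x @ [v]) \<and> L \<le> labA (x @ [v])}"
    then have v: "v \<in> EA x" "rf (x @ [v])" "L \<le> labA (x @ [v])" by auto
    show "v \<in> (if L \<le> 1 then {0} else {}) \<union> (if L \<le> labA x + 1 then {mx x + 1} else {})"
    proof (cases "v = 0")
      case True
      then show ?thesis using v A_child0[OF I] \<open>rf x\<close> by simp
    next
      case False
      note c = A_child1[OF I v(1) False]
      have "v = mx x + 1" using c(2) v(2) by simp
      then show ?thesis using c(3) v(3) \<open>rf x\<close> by simp
    qed
  next
    fix v assume v: "v \<in> (if L \<le> 1 then {0} else {}) \<union> (if L \<le> labA x + 1 then {mx x + 1} else {})"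
    show "v \<in> {v \<in> EA x. rf (x @ [v]) \<and> L \<le> labA (x @ [v])}"
    proof (cases "v = 0")
      case True
      then have "L \<le> 1" using v by (auto split: if_splits)
      then show ?thesis using True A_child0[OF I] \<open>rf x\<close> unfolding EA_def by simp
    next
      case False
      then have vv: "v = mx x + 1" "L \<le> labA x + 1" using v by (auto split: if_splits)
      have vin: "v \<in> EA x" using A_M1_in[OF I \<open>rf x\<close>] vv by simp
      note c = A_child1[OF I vin False]
      show ?thesis using vin c(2) c(3) vv \<open>rf x\<close> by simp
    qed
  qed
  show ?thesis unfolding eq using True by (auto simp: card_insert_if)
next
  case False
  have e: "{v \<in> EA x. rf (x @ [v]) \<and> L \<le> labA (x @ [v])} = {}"
  proof (intro set_eqI iffI)
    fix v assume "v \<in> {v \<in> EA x. rf (x @ [v]) \<and> L \<le> labA (x @ [v])}"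
    then have v: "v \<in> EA x" "rf (x @ [v])" by auto
    show "v \<in> {}"
    proof (cases "v = 0")
      case True then show ?thesis using v A_child0[OF I] False by simp
    next
      case f2: False then show ?thesis using v A_child1[OF I v(1) f2] False by simp
    qed
  qed simp
  show ?thesis using False by (simp only: e card.empty) simp
qed

lemma A_cFc:
  assumes I: "InvA x" and L: "1 \<le> L"
  shows "card {v \<in> EA x. \<not> rf (x @ [v]) \<and> last (x @ [v]) \<noteq> 0 \<and> labA (x @ [v]) = L} =
    (if rf x \<and> L + 1 \<le> labA x then 1 else 0) + (if \<not> rf x \<and> last x \<noteq> 0 \<and> L \<le> labA x then 1 else 0)"
proof -
  have xne: "x \<noteq> []" "x ! 0 = 0" using I unfolding InvA_def by auto
  let ?w = "L + sA x - 1"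
  let ?c = "?w \<le> tA x \<and> \<not> (rf x \<and> ?w = mx x + 1)"
  have s1: "1 \<le> sA x" using sA_pos[OF xne] .
  have eq: "{v \<in> EA x. \<not> rf (x @ [v]) \<and> last (x @ [v]) \<noteq> 0 \<and> labA (x @ [v]) = L} =
     (if ?c then {?w} else {})"
  proof (intro set_eqI iffI)
    fix v assume "v \<in> {v \<in> EA x. \<not> rf (x @ [v]) \<and> last (x @ [v]) \<noteq> 0 \<and> labA (x @ [v]) = L}"
    then have v: "v \<in> EA x" "\<not> rf (x @ [v])" "last (x @ [v]) \<noteq> 0" "labA (x @ [v]) = L" by auto
    have v0: "v \<noteq> 0" using v(3) by simp
    note c = A_child1[OF I v(1) v0]
    have nr: "\<not> (rf x \<and> v = mx x + 1)" using c(2) v(2) by simp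
    have "labA (x @ [v]) = v + 1 - sA x" using c(3) by (simp only: if_not_P[OF nr])
    then have "v + 1 - sA x = L" using v(4) by simp
    then have "v = ?w" using c(4) by simp
    then show "v \<in> (if ?c then {?w} else {})" using c(5) nr by simp
  next
    fix v assume "v \<in> (if ?c then {?w} else {})"
    then have vw: "v = ?w" and cc: ?c by (auto split: if_splits)
    have v0: "v \<noteq> 0" using vw L s1 by simp
    have "sA x \<le> v" "v \<le> tA x" using vw cc L by auto
    then have vin: "v \<in> EA x" unfolding EA_def by simp
    note c = A_child1[OF I vin v0]
    have nr: "\<not> (rf x \<and> v = mx x + 1)" using cc vw by simp
    have "labA (x @ [v]) = v + 1 - sA x" using c(3) by (simp only: if_not_P[OF nr])
    then have "labA (x @ [v]) = L" using vw L s1 by simp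
    then show "v \<in> {v \<in> EA x. \<not> rf (x @ [v]) \<and> last (x @ [v]) \<noteq> 0 \<and> labA (x @ [v]) = L}"
      using vin c(1) c(2) cc vw v0 by simp
  qed
  have cc: "?c \<longleftrightarrow> (rf x \<and> L + 1 \<le> labA x) \<or> (\<not> rf x \<and> last x \<noteq> 0 \<and> L \<le> labA x)"
  proof (cases "rf x")
    case True
    have "labA x = mx x + 2 - sA x" "tA x = mx x + 1" using lab_rf[OF I True] by auto
    moreover have "sA x \<le> mx x + 1" using sA_le[OF xne] .
    ultimately show ?thesis using True L s1 by auto
  next
    case nr: False
    show ?thesis
    proof (cases "last x = 0")
      case True
      then have "tA x = 0" using nr unfolding tA_def by simp
      then show ?thesis using nr True L s1 by simp
    next
      case False
      have "sA x \<le> last x" "labA x = last x + 1 - sA x" using lab_F[OF I nr False] by auto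
      moreover have "tA x = last x" using nr unfolding tA_def by simp
      ultimately show ?thesis using nr False L s1 by auto
    qed
  qed
  show ?thesis unfolding eq using cc by auto
qed

lemma A_Dc:
  assumes I: "InvA x"
  shows "card {v \<in> EA x. \<not> rf (x @ [v]) \<and> last (x @ [v]) = 0} = (if rf x then 0 else 1)"
proof -
  have "{v \<in> EA x. \<not> rf (x @ [v]) \<and> last (x @ [v]) = 0} = (if rf x then {} else {0})"
  proof (intro set_eqI iffI)
    fix v assume "v \<in> {v \<in> EA x. \<not> rf (x @ [v]) \<and> last (x @ [v]) = 0}"
    then have v: "v \<in> EA x" "\<not> rf (x @ [v])" "last (x @ [v]) = 0" by auto
    then have "v = 0" by simp
    then show "v \<in> (if rf x then {} else {0})" using v A_child0[OF I] by simp
  next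
    fix v :: nat assume v: "v \<in> (if rf x then {} else {0})"
    then have "v = 0" "\<not> rf x" by (auto split: if_splits)
    then show "v \<in> {v \<in> EA x. \<not> rf (x @ [v]) \<and> last (x @ [v]) = 0}"
      using A_child0[OF I] unfolding EA_def by simp
  qed
  then show ?thesis by simp
qed

lemma card_none: "(\<And>x. x \<in> A \<Longrightarrow> \<not> P x) \<Longrightarrow> card {x \<in> A. P x} = 0"
proof -
  assume h: "\<And>x. x \<in> A \<Longrightarrow> \<not> P x"
  have e: "{x \<in> A. P x} = {}" using h by blast
  show ?thesis by (simp only: e card.empty)
qed

lemma A_GT_step:
  assumes n: "1 \<le> n"
  shows "card {y \<in> Cls PA (Suc n). rf y \<and> L \<le> labA y} =
    card {x \<in> Cls PA n. rf x \<and> L \<le> 1} + card {x \<in> Cls PA n. rf x \<and> L \<le> labA x + 1}"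
proof -
  have "card {y \<in> Cls PA (Suc n). rf y \<and> L \<le> labA y} =
     (\<Sum>x\<in>Cls PA n. card {v \<in> EA x. rf (x @ [v]) \<and> L \<le> labA (x @ [v])})"
    by (rule A.count_step[OF n])
  also have "\<dots> = (\<Sum>x\<in>Cls PA n. (if rf x \<and> L \<le> 1 then 1 else 0) + (if rf x \<and> L \<le> labA x + 1 then 1 else 0))"
    by (intro sum.cong refl A_GTc A_basic(1)[OF _ n]) 
  also have "\<dots> = (\<Sum>x\<in>Cls PA n. if rf x \<and> L \<le> 1 then 1 else 0) + (\<Sum>x\<in>Cls PA n. if rf x \<and> L \<le> labA x + 1 then 1 else 0)"
    by (rule sum.distrib)
  also have "\<dots> = card {x \<in> Cls PA n. rf x \<and> L \<le> 1} + card {x \<in> Cls PA n. rf x \<and> L \<le> labA x + 1}"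
    by (simp only: sum_if_card[OF finite_Cls])
  finally show ?thesis .
qed

lemma A_cF_step:
  assumes n: "1 \<le> n" and L: "1 \<le> L"
  shows "card {y \<in> Cls PA (Suc n). \<not> rf y \<and> last y \<noteq> 0 \<and> labA y = L} =
    card {x \<in> Cls PA n. rf x \<and> L + 1 \<le> labA x} + card {x \<in> Cls PA n. \<not> rf x \<and> last x \<noteq> 0 \<and> L \<le> labA x}"
proof -
  have "card {y \<in> Cls PA (Suc n). \<not> rf y \<and> last y \<noteq> 0 \<and> labA y = L} =
     (\<Sum>x\<in>Cls PA n. card {v \<in> EA x. \<not> rf (x @ [v]) \<and> last (x @ [v]) \<noteq> 0 \<and> labA (x @ [v]) = L})"
    by (rule A.count_step[OF n])
  also have "\<dots> = (\<Sum>x\<in>Cls PA n. (if rf x \<and> L + 1 \<le> labA x then 1 else 0) + (if \<not> rf x \<and> last x \<noteq> 0 \<and> L \<le> labA x then 1 else 0))"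
    by (intro sum.cong refl A_cFc A_basic(1)[OF _ n] L)
  also have "\<dots> = (\<Sum>x\<in>Cls PA n. if rf x \<and> L + 1 \<le> labA x then 1 else 0) + (\<Sum>x\<in>Cls PA n. if \<not> rf x \<and> last x \<noteq> 0 \<and> L \<le> labA x then 1 else 0)"
    by (rule sum.distrib)
  also have "\<dots> = card {x \<in> Cls PA n. rf x \<and> L + 1 \<le> labA x} + card {x \<in> Cls PA n. \<not> rf x \<and> last x \<noteq> 0 \<and> L \<le> labA x}"
    by (simp only: sum_if_card[OF finite_Cls])
  finally show ?thesis .
qed

lemma A_D_step:
  assumes n: "1 \<le> n"
  shows "card {y \<in> Cls PA (Suc n). \<not> rf y \<and> last y = 0} = card {x \<in> Cls PA n. \<not> rf x}"
proof -
  have "card {y \<in> Cls PA (Suc n). \<not> rf y \<and> last y = 0} =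
     (\<Sum>x\<in>Cls PA n. card {v \<in> EA x. \<not> rf (x @ [v]) \<and> last (x @ [v]) = 0})"
    by (rule A.count_step[OF n])
  also have "\<dots> = (\<Sum>x\<in>Cls PA n. if \<not> rf x then 1 else 0)"
  proof (intro sum.cong refl)
    fix x assume "x \<in> Cls PA n"
    then show "card {v \<in> EA x. \<not> rf (x @ [v]) \<and> last (x @ [v]) = 0} = (if \<not> rf x then 1 else 0)"
      using A_Dc[OF A_basic(1)[OF _ n]] by simp
  qed
  also have "\<dots> = card {x \<in> Cls PA n. \<not> rf x}"
    by (simp only: sum_if_card[OF finite_Cls])
  finally show ?thesis .
qed

lemma A_rf_lab: "x \<in> Cls PA n \<Longrightarrow> 1 \<le> n \<Longrightarrow> rf x \<Longrightarrow> 1 \<le> labA x"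
  using lab_rf(3) A_basic(1) by blast

lemma A_GT:
  assumes n: "1 \<le> n"
  shows "1 \<le> L \<Longrightarrow> card {x \<in> Cls PA n. rf x \<and> L \<le> labA x} = (if L \<le> n then 2 ^ (n - L) else 0)"
  using n
proof (induction n arbitrary: L rule: nat_induct_at_least)
  case base
  have c: "Cls PA 1 = {[0]}" by (rule Cls_1) simp
  have e: "{x \<in> Cls PA 1. rf x \<and> L \<le> labA x} = (if L \<le> 1 then {[0]} else {})"
    unfolding c using rf_single labA_single by auto
  show ?case
  proof (cases "L = 1")
    case True
    then show ?thesis using e by simp
  next
    case False
    then have nl: "\<not> L \<le> 1" using base.prems by simp
    then have e2: "{x \<in> Cls PA 1. rf x \<and> L \<le> labA x} = {}" using e by simp
    show ?thesis using nl by (simp only: e2 card.empty) simp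
  qed
next
  case (Suc n)
  have rfl: "{x \<in> Cls PA n. rf x \<and> 1 \<le> labA x} = {x \<in> Cls PA n. rf x}"
    using A_rf_lab[OF _ Suc.hyps] by blast
  have T: "card {x \<in> Cls PA n. rf x} = 2 ^ (n - 1)"
    using Suc.IH[of 1] Suc.hyps rfl by simp
  note st = A_GT_step[OF Suc.hyps, of L]
  show ?case
  proof (cases "L = 1")
    case True
    have a: "{x \<in> Cls PA n. rf x \<and> L \<le> 1} = {x \<in> Cls PA n. rf x}" using True by simp
    have b: "{x \<in> Cls PA n. rf x \<and> L \<le> labA x + 1} = {x \<in> Cls PA n. rf x}" using True by simp
    have "card {y \<in> Cls PA (Suc n). rf y \<and> L \<le> labA y} = 2 * 2 ^ (n - 1)"
      using st a b T by simp
    also have "\<dots> = 2 ^ (Suc n - L)" using True Suc.hyps by (cases n) auto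
    finally show ?thesis using True by simp
  next
    case False
    then have L2: "2 \<le> L" using Suc.prems by simp
    have a: "card {x \<in> Cls PA n. rf x \<and> L \<le> 1} = 0" by (rule card_none) (use L2 in simp)
    have b: "{x \<in> Cls PA n. rf x \<and> L \<le> labA x + 1} = {x \<in> Cls PA n. rf x \<and> L - 1 \<le> labA x}"
      using L2 by auto
    have "card {y \<in> Cls PA (Suc n). rf y \<and> L \<le> labA y} = card {x \<in> Cls PA n. rf x \<and> L - 1 \<le> labA x}"
      using st unfolding a b by simp
    also have "\<dots> = (if L - 1 \<le> n then 2 ^ (n - (L - 1)) else 0)" using Suc.IH[of "L - 1"] L2 by simp
    also have "\<dots> = (if L \<le> Suc n then 2 ^ (Suc n - L) else 0)"
    proof -
      have "L - 1 \<le> n \<longleftrightarrow> L \<le> Suc n" using L2 by linarith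
      moreover have "n - (L - 1) = Suc n - L" using L2 by linarith
      ultimately show ?thesis by simp
    qed
    finally show ?thesis .
  qed
qed


lemma card_split_ge2:
  assumes "finite A"
  shows "card {x \<in> A. P x \<and> j \<le> (f x::nat)} = card {x \<in> A. P x \<and> f x = j} + card {x \<in> A. P x \<and> Suc j \<le> f x}"
proof -
  have "{x \<in> A. P x \<and> j \<le> f x} = {x \<in> A. P x \<and> f x = j} \<union> {x \<in> A. P x \<and> Suc j \<le> f x}" by auto
  moreover have "card ({x \<in> A. P x \<and> f x = j} \<union> {x \<in> A. P x \<and> Suc j \<le> f x}) =
      card {x \<in> A. P x \<and> f x = j} + card {x \<in> A. P x \<and> Suc j \<le> f x}"
    by (rule card_Un_disjoint) (use assms in auto)
  ultimately show ?thesis by simp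
qed

lemma arith_GF:
  assumes "k \<le> (n::nat)"
  shows "(if k + 1 \<le> n then 2 ^ (n - (k + 1)) else 0) + (n - k - 1) * 2 ^ (n - k - 2) + (n - k - 1) * 2 ^ (n - k - 2)
     = (n - k) * (2::nat) ^ (n - k - 1)"
proof -
  obtain d where d: "n = k + d" using assms le_Suc_ex by blast
  show ?thesis
  proof (cases d)
    case 0 then show ?thesis using d by simp
  next
    case (Suc e)
    show ?thesis
    proof (cases e)
      case 0 then show ?thesis using d Suc by simp
    next
      case (Suc f)
      have "n - (k + 1) = f + 1" "n - k - 1 = f + 1" "n - k - 2 = f" "n - k = f + 2"
        using d \<open>d = Suc e\<close> Suc by simp_all
      moreover have "k + 1 \<le> n" using d \<open>d = Suc e\<close> by simp
      ultimately show ?thesis by (simp add: algebra_simps)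
    qed
  qed
qed

lemma A_GF:
  assumes n: "1 \<le> n"
  shows "1 \<le> L \<Longrightarrow> card {x \<in> Cls PA n. \<not> rf x \<and> last x \<noteq> 0 \<and> L \<le> labA x} = (n - L - 1) * 2 ^ (n - L - 2)"
  using n
proof (induction n arbitrary: L rule: nat_induct_at_least)
  case base
  have c: "Cls PA 1 = {[0]}" by (rule Cls_1) simp
  have "card {x \<in> Cls PA 1. \<not> rf x \<and> last x \<noteq> 0 \<and> L \<le> labA x} = 0"
    by (rule card_none) (use c rf_single in auto)
  then show ?case by simp
next
  case (Suc n)
  let ?G = "\<lambda>k. card {x \<in> Cls PA (Suc n). \<not> rf x \<and> last x \<noteq> 0 \<and> k \<le> labA x}"
  have zero: "?G k = 0" if k: "Suc n \<le> k" for k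
  proof (rule card_none)
    fix x assume x: "x \<in> Cls PA (Suc n)"
    have I: "InvA x" using A_basic(1)[OF x] by simp
    have "last x \<le> n" using B_last_bound[OF x] by simp
    then show "\<not> (\<not> rf x \<and> last x \<noteq> 0 \<and> k \<le> labA x)"
      using lab_F(4)[OF I] k by fastforce
  qed
  show ?case
  proof (cases "Suc n \<le> L")
    case True
    then show ?thesis using zero[OF True] by simp
  next
    case False
    then have Ln: "L \<le> Suc n" by simp
    have "1 \<le> L \<longrightarrow> ?G L = (Suc n - L - 1) * 2 ^ (Suc n - L - 2)"
      using Ln
    proof (induction L rule: inc_induct)
      case base
      show ?case using zero[of "Suc n"] by simp
    next
      case (step k)
      show ?case
      proof
        assume k1: "1 \<le> k"
        have kn: "k \<le> n" using step.hyps by simp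
        have "?G k = card {x \<in> Cls PA (Suc n). \<not> rf x \<and> last x \<noteq> 0 \<and> labA x = k} + ?G (Suc k)"
          using card_split_ge2[OF finite_Cls, of PA "Suc n" "\<lambda>x. \<not> rf x \<and> last x \<noteq> 0" k labA]
          by (simp add: conj_assoc)
        also have "card {x \<in> Cls PA (Suc n). \<not> rf x \<and> last x \<noteq> 0 \<and> labA x = k} =
          card {x \<in> Cls PA n. rf x \<and> k + 1 \<le> labA x} + card {x \<in> Cls PA n. \<not> rf x \<and> last x \<noteq> 0 \<and> k \<le> labA x}"
          by (rule A_cF_step[OF Suc.hyps k1])
        also have "card {x \<in> Cls PA n. rf x \<and> k + 1 \<le> labA x} = (if k + 1 \<le> n then 2 ^ (n - (k + 1)) else 0)"
          using A_GT[OF Suc.hyps, of "k + 1"] by simp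
        also have "card {x \<in> Cls PA n. \<not> rf x \<and> last x \<noteq> 0 \<and> k \<le> labA x} = (n - k - 1) * 2 ^ (n - k - 2)"
          using Suc.IH[OF k1] .
        also have "?G (Suc k) = (n - k - 1) * 2 ^ (n - k - 2)"
          using step.IH k1 by simp
        also have "(if k + 1 \<le> n then 2 ^ (n - (k + 1)) else 0) + (n - k - 1) * 2 ^ (n - k - 2) + (n - k - 1) * 2 ^ (n - k - 2)
           = (n - k) * (2::nat) ^ (n - k - 1)" by (rule arith_GF[OF kn])
        also have "\<dots> = (Suc n - k - 1) * 2 ^ (Suc n - k - 2)"
          using kn by (simp add: Suc_diff_le)
        finally show "?G k = (Suc n - k - 1) * 2 ^ (Suc n - k - 2)" .
      qed
    qed
    then show ?thesis using Suc.prems by blast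
  qed
qed

lemma A_total:
  assumes n: "1 \<le> n"
  shows "card (Cls PA (Suc n)) + 2 ^ (n - 1) = 2 ^ n + (n - 1) * 2 ^ (n - 2) + card (Cls PA n)"
proof -
  let ?S = "Cls PA (Suc n)"
  have sn: "1 \<le> Suc n" by simp
  have p1: "card ?S = card {x \<in> ?S. rf x} + card {x \<in> ?S. \<not> rf x}"
    by (rule card_part[OF finite_Cls])
  have p2: "card {x \<in> ?S. \<not> rf x} = card {x \<in> ?S. \<not> rf x \<and> last x \<noteq> 0} + card {x \<in> ?S. \<not> rf x \<and> last x = 0}"
  proof -
    have "card {x \<in> {x \<in> ?S. \<not> rf x}. last x \<noteq> 0} + card {x \<in> {x \<in> ?S. \<not> rf x}. \<not> last x \<noteq> 0} = card {x \<in> ?S. \<not> rf x}"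
      by (rule card_part[symmetric]) (simp add: finite_Cls)
    moreover have "{x \<in> {x \<in> ?S. \<not> rf x}. last x \<noteq> 0} = {x \<in> ?S. \<not> rf x \<and> last x \<noteq> 0}" by auto
    moreover have "{x \<in> {x \<in> ?S. \<not> rf x}. \<not> last x \<noteq> 0} = {x \<in> ?S. \<not> rf x \<and> last x = 0}" by auto
    ultimately show ?thesis by simp
  qed
  have T: "card {x \<in> ?S. rf x} = 2 ^ n"
  proof -
    have "{x \<in> ?S. rf x} = {x \<in> ?S. rf x \<and> 1 \<le> labA x}" using A_rf_lab[OF _ sn] by blast
    then show ?thesis using A_GT[OF sn, of 1] by simp
  qed
  have F: "card {x \<in> ?S. \<not> rf x \<and> last x \<noteq> 0} = (n - 1) * 2 ^ (n - 2)"
  proof -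
    have "{x \<in> ?S. \<not> rf x \<and> last x \<noteq> 0} = {x \<in> ?S. \<not> rf x \<and> last x \<noteq> 0 \<and> 1 \<le> labA x}"
      using lab_F(3)[OF A_basic(1)[OF _ sn]] by blast
    then show ?thesis using A_GF[OF sn, of 1] by simp
  qed
  have D: "card {x \<in> ?S. \<not> rf x \<and> last x = 0} = card {x \<in> Cls PA n. \<not> rf x}"
    by (rule A_D_step[OF n])
  have Tn: "card {x \<in> Cls PA n. rf x} = 2 ^ (n - 1)"
  proof -
    have "{x \<in> Cls PA n. rf x} = {x \<in> Cls PA n. rf x \<and> 1 \<le> labA x}" using A_rf_lab[OF _ n] by blast
    then show ?thesis using A_GT[OF n, of 1] n by simp
  qed
  have pn: "card (Cls PA n) = card {x \<in> Cls PA n. rf x} + card {x \<in> Cls PA n. \<not> rf x}"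
    by (rule card_part[OF finite_Cls])
  show ?thesis using p1 p2 T F D Tn pn by simp
qed

lemma A_formula:
  assumes "1 \<le> n"
  shows "int (card (Cls PA n)) = (int n - 1) * 2 ^ (n - 2) + 1"
  using assms
proof (induction n rule: nat_induct_at_least)
  case base
  have c: "Cls PA 1 = {[0]}" by (rule Cls_1) simp
  then show ?case by simp
next
  case (Suc n)
  have h: "int (card (Cls PA (Suc n))) + 2 ^ (n - 1) = 2 ^ n + int (n - 1) * 2 ^ (n - 2) + int (card (Cls PA n))"
  proof -
    have "int (card (Cls PA (Suc n)) + 2 ^ (n - 1)) = int (2 ^ n + (n - 1) * 2 ^ (n - 2) + card (Cls PA n))"
      using A_total[OF Suc.hyps] by (simp only:)
    then show ?thesis by simp
  qed
  show ?case
  proof (cases "n = 1")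
    case True
    then show ?thesis using h Suc.IH by simp
  next
    case False
    then obtain m where m: "n = Suc (Suc m)" using Suc.hyps by (cases n; cases "n - 1") auto
    have IH: "int (card (Cls PA n)) = (int m + 1) * 2 ^ m + 1" using Suc.IH m by simp
    have h2: "int (card (Cls PA (Suc n))) + 2 * 2 ^ m = 4 * 2 ^ m + (int m + 1) * 2 ^ m + int (card (Cls PA n))"
      using h m by simp
    have "int (card (Cls PA (Suc n))) = (int m + 2) * (2 * 2 ^ m) + 1"
      using h2 IH by (simp add: algebra_simps)
    then show ?thesis using m by simp
  qed
qed

theorem theorem3p2:
  fixes n :: nat
  assumes "n \<ge> 1"
  shows "a_count {[0,1,0,1], [0,1,1,2]} n = a_count {[0,1,0,2], [0,1,1,2]} n
    \<and> a_count {[0,1,0,2], [0,1,1,2]} n = a_count {[0,1,2,1], [0,1,1,2]} n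
    \<and> a_count {[0,1,2,1], [0,1,1,2]} n = a_count {[0,1,0,2], [0,1,2,0]} n
    \<and> int (a_count {[0,1,0,2], [0,1,2,0]} n) = (int n - 1) * 2 ^ (n - 2) + 1"
proof -
  have a: "int (a_count {[0,1,0,1], [0,1,1,2]} n) = (int n - 1) * 2 ^ (n - 2) + 1"
    unfolding a_count_Cls using A_formula[OF assms] .
  have b: "int (a_count {[0,1,0,2], [0,1,1,2]} n) = (int n - 1) * 2 ^ (n - 2) + 1"
    unfolding a_count_Cls using B_formula[OF assms] .
  have c: "int (a_count {[0,1,2,1], [0,1,1,2]} n) = (int n - 1) * 2 ^ (n - 2) + 1"
    unfolding a_count_Cls using C.total_formula[OF assms] .
  have d: "int (a_count {[0,1,0,2], [0,1,2,0]} n) = (int n - 1) * 2 ^ (n - 2) + 1"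
    unfolding a_count_Cls using D.total_formula[OF assms] .
  show ?thesis using a b c d by (metis of_nat_eq_iff)
qed

end
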